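(* Let $A \in \mathbb{R}^{m \times n_x}$, $a \in \mathbb{R}^m$, $C \in \mathbb{R}^{\ell \times n_x}$, $D \in \mathbb{R}^{\ell \times n_y}$, $b \in \mathbb{R}^\ell$, $d \in \mathbb{R}^{n_y}$ satisfy: the set $\{(x,y) : Ax \ge a,\ Cx + Dy \ge b\}$ is nonempty and compact, for every $x$ with $Ax \ge a$ there exists $y$ with $Cx + Dy \ge b$, and $\{x : Ax \ge a\}$ is bounded. For $x$ with $Ax \ge a$, consider the lower-level linear program $\min_{y}\{ d^\top y : Dy \ge b - Cx\}$ and its dual $\max_z \{(b - Cx)^\top z : D^\top z = d,\ z \ge 0\}$. Then there is a constant $\kappa(A,C,D,a,b,d) > 0$, depending only on $A,C,D,a,b,d$ and whose encoding size is polynomial in the encoding size of these data, such that the following holds for every $\varepsilon > 0$ and every $x$ with $Ax \ge a$: if $\hat{y} \in \mathbb{R}^{n_y}$ and $\hat{z} \in \mathbb{R}^\ell$ satisfy (i) $D\hat{y} \ge b - Cx - \varepsilon e_\ell$, (ii) $\|D^\top \hat{z} - d\|_\infty \le \varepsilon$ and $\hat{z} \ge -\varepsilon e_\ell$, and (iii) $d^\top \hat{y} - (b - Cx)^\top \hat{z} \le \varepsilon$, then there exists an optimal solution $y^*$ of the lower-level problem $\min_y\{d^\top y : Dy \ge b - Cx\}$ with $\|y^* - \hat{y}\|_1 \le \varepsilon\, \kappa(A,C,D,a,b,d)$.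
   Context: $e_k \in \mathbb{R}^k$ denotes the all-ones vector. *)

theory Defs
  imports "HOL-Analysis.Analysis"
begin

text \<open>Vectors in R^n are represented as functions nat => real (only indices < n matter);
  matrices as nat => nat => _ (rows i < rows, columns j < cols).
  The data A, a, C, D, b, d are rational, so that their encoding size is defined.\<close>

definition vec_set :: "nat \<Rightarrow> (nat \<Rightarrow> real) set" where
  "vec_set n = {x. \<forall>j\<ge>n. x j = 0}"

definition mat_vec :: "(nat \<Rightarrow> nat \<Rightarrow> rat) \<Rightarrow> nat \<Rightarrow> (nat \<Rightarrow> real) \<Rightarrow> nat \<Rightarrow> real" where
  "mat_vec M n v i = (\<Sum>j<n. real_of_rat (M i j) * v j)"

definition ul_feasible :: "nat \<Rightarrow> nat \<Rightarrow> (nat \<Rightarrow> nat \<Rightarrow> rat) \<Rightarrow> (nat \<Rightarrow> rat) \<Rightarrow> (nat \<Rightarrow> real) \<Rightarrow> bool" where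
  "ul_feasible m nx A a x \<longleftrightarrow> (\<forall>i<m. mat_vec A nx x i \<ge> real_of_rat (a i))"

definition ll_feasible :: "nat \<Rightarrow> nat \<Rightarrow> nat \<Rightarrow> (nat \<Rightarrow> nat \<Rightarrow> rat) \<Rightarrow> (nat \<Rightarrow> nat \<Rightarrow> rat)
    \<Rightarrow> (nat \<Rightarrow> rat) \<Rightarrow> (nat \<Rightarrow> real) \<Rightarrow> (nat \<Rightarrow> real) \<Rightarrow> bool" where
  "ll_feasible l nx ny C D b x y \<longleftrightarrow>
     (\<forall>i<l. mat_vec D ny y i \<ge> real_of_rat (b i) - mat_vec C nx x i)"

definition ll_optimal :: "nat \<Rightarrow> nat \<Rightarrow> nat \<Rightarrow> (nat \<Rightarrow> nat \<Rightarrow> rat) \<Rightarrow> (nat \<Rightarrow> nat \<Rightarrow> rat)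
    \<Rightarrow> (nat \<Rightarrow> rat) \<Rightarrow> (nat \<Rightarrow> rat) \<Rightarrow> (nat \<Rightarrow> real) \<Rightarrow> (nat \<Rightarrow> real) \<Rightarrow> bool" where
  "ll_optimal l nx ny C D b d x y \<longleftrightarrow>
     ll_feasible l nx ny C D b x y \<and>
     (\<forall>y'. ll_feasible l nx ny C D b x y' \<longrightarrow>
        (\<Sum>j<ny. real_of_rat (d j) * y j) \<le> (\<Sum>j<ny. real_of_rat (d j) * y' j))"

text \<open>Encoding sizes (Schrijver's convention): integers, rationals p/q in lowest terms,
  vectors (n + sum of entry sizes), matrices (m n + sum of entry sizes).\<close>
definition size_int :: "int \<Rightarrow> nat" where
  "size_int z = 1 + nat \<lceil>log 2 (real_of_int \<bar>z\<bar> + 1)\<rceil>"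

definition size_rat :: "rat \<Rightarrow> nat" where
  "size_rat r = (case quotient_of r of (p, q) \<Rightarrow> size_int p + size_int q)"

definition size_vec :: "nat \<Rightarrow> (nat \<Rightarrow> rat) \<Rightarrow> nat" where
  "size_vec n v = n + (\<Sum>j<n. size_rat (v j))"

definition size_mat :: "nat \<Rightarrow> nat \<Rightarrow> (nat \<Rightarrow> nat \<Rightarrow> rat) \<Rightarrow> nat" where
  "size_mat r c M = r * c + (\<Sum>i<r. \<Sum>j<c. size_rat (M i j))"

end

theory Submission
  imports Defs "Jordan_Normal_Form.Determinant"
begin


lemma sum_split_I:
  fixes F :: "nat \<Rightarrow> real"
  assumes "finite Z" "finite P" "finite N"
  shows "(\<Sum>q\<in>(\<lambda>i. 2*i) ` Z \<union> (\<lambda>(i,k). 2 * prod_encode (i,k) + 1) ` (P \<times> N). F q)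
       = (\<Sum>i\<in>Z. F (2*i)) + (\<Sum>i\<in>P. \<Sum>k\<in>N. F (2 * prod_encode (i,k) + 1))"
proof -
  have inj1: "inj_on (\<lambda>i::nat. 2*i) Z" by (auto simp: inj_on_def)
  have inj2: "inj_on (\<lambda>(i,k). 2 * prod_encode (i,k) + 1) (P \<times> N)"
    by (auto simp: inj_on_def dest: inj_onD[OF inj_prod_encode, of _ _ UNIV, simplified])
  have disj: "(\<lambda>i::nat. 2*i) ` Z \<inter> (\<lambda>(i,k). 2 * prod_encode (i,k) + 1) ` (P \<times> N) = {}"
    by auto presburger
  have "(\<Sum>q\<in>(\<lambda>i. 2*i) ` Z \<union> (\<lambda>(i,k). 2 * prod_encode (i,k) + 1) ` (P \<times> N). F q)
     = (\<Sum>q\<in>(\<lambda>i. 2*i) ` Z. F q) + (\<Sum>q\<in>(\<lambda>(i,k). 2 * prod_encode (i,k) + 1) ` (P \<times> N). F q)"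
    using assms disj by (intro sum.union_disjoint) auto
  also have "(\<Sum>q\<in>(\<lambda>i. 2*i) ` Z. F q) = (\<Sum>i\<in>Z. F (2*i))"
    using sum.reindex[OF inj1] by simp
  also have "(\<Sum>q\<in>(\<lambda>(i,k). 2 * prod_encode (i,k) + 1) ` (P \<times> N). F q)
      = (\<Sum>(i,k)\<in>P \<times> N. F (2 * prod_encode (i,k) + 1))"
    using sum.reindex[OF inj2] by (simp add: case_prod_beta comp_def)
  also have "\<dots> = (\<Sum>i\<in>P. \<Sum>k\<in>N. F (2 * prod_encode (i,k) + 1))"
    by (simp add: sum.cartesian_product)
  finally show ?thesis .
qed

lemma farkas:
  fixes g :: "nat \<Rightarrow> nat \<Rightarrow> real" and h :: "nat \<Rightarrow> real"
  assumes "finite I" and "\<not> (\<exists>y. \<forall>i\<in>I. (\<Sum>j<n. g i j * y j) \<ge> h i)"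
  shows "\<exists>u. (\<forall>i\<in>I. u i \<ge> 0) \<and> (\<forall>j<n. (\<Sum>i\<in>I. u i * g i j) = 0) \<and> (\<Sum>i\<in>I. u i * h i) > 0"
  using assms
proof (induction n arbitrary: I g h)
  case 0
  then obtain i where i: "i \<in> I" "h i > 0" by (auto simp: not_le)
  have "(\<Sum>k\<in>I. (if k = i then 1 else 0) * h k) = h i"
  proof -
    have "(\<Sum>k\<in>I. (if k = i then 1 else 0) * h k) = (\<Sum>k\<in>I. if k = i then h k else 0)"
      by (rule sum.cong) auto
    also have "\<dots> = h i" using i 0 by (simp add: sum.delta)
    finally show ?thesis .
  qed
  then show ?case using i
    by (intro exI[of _ "\<lambda>k. if k = i then 1 else 0"]) auto
next
  case (Suc n)
  define Z where "Z = {i\<in>I. g i n = 0}"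
  define P where "P = {i\<in>I. g i n > 0}"
  define N where "N = {i\<in>I. g i n < 0}"
  define I' where "I' = (\<lambda>i. 2*i) ` Z \<union> (\<lambda>(i,k). 2 * prod_encode (i,k) + 1) ` (P \<times> N)"
  define g' where "g' q j = (if even q then g (q div 2) j else
      (case prod_decode (q div 2) of (i,k) \<Rightarrow> (- g k n) * g i j + g i n * g k j))" for q j
  define h' where "h' q = (if even q then h (q div 2) else
      (case prod_decode (q div 2) of (i,k) \<Rightarrow> (- g k n) * h i + g i n * h k))" for q
  have fin: "finite Z" "finite P" "finite N" using Suc.prems(1) by (auto simp: Z_def P_def N_def)
  have finI': "finite I'" using fin by (simp add: I'_def)
  have g'1: "g' (2*i) j = g i j" "h' (2*i) = h i" for i j by (simp_all add: g'_def h'_def)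
  have g'2: "g' (2*prod_encode (i,k)+1) j = (- g k n) * g i j + g i n * g k j"
    "h' (2*prod_encode (i,k)+1) = (- g k n) * h i + g i n * h k" for i k j
    by (simp_all add: g'_def h'_def)
  have lin: "(\<Sum>j<n. (\<alpha> * g a j + \<beta> * g k j) * y j) = \<alpha> * (\<Sum>j<n. g a j * y j) + \<beta> * (\<Sum>j<n. g k j * y j)"
    for \<alpha> \<beta> a k and y :: "nat \<Rightarrow> real"
    by (simp add: sum.distrib sum_distrib_left algebra_simps)
  have noty: "\<not> (\<exists>y. \<forall>q\<in>I'. (\<Sum>j<n. g' q j * y j) \<ge> h' q)"
  proof
    assume "\<exists>y. \<forall>q\<in>I'. (\<Sum>j<n. g' q j * y j) \<ge> h' q"
    then obtain y where y: "\<And>q. q \<in> I' \<Longrightarrow> (\<Sum>j<n. g' q j * y j) \<ge> h' q" by blast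
    define S where "S i = (\<Sum>j<n. g i j * y j)" for i
    define lo where "lo i = (h i - S i) / g i n" for i
    define t where "t = (if P \<noteq> {} then Max (lo ` P) else if N \<noteq> {} then Min (lo ` N) else 0)"
    have yZ: "S i \<ge> h i" if "i \<in> Z" for i
      using y[of "2*i"] that unfolding I'_def S_def by (auto simp: g'1)
    have key: "lo a \<le> lo k" if a: "a \<in> P" and k: "k \<in> N" for a k
    proof -
      have "2 * prod_encode (a,k) + 1 \<in> I'" using a k unfolding I'_def by force
      from y[OF this] have "(- g k n) * S a + g a n * S k \<ge> (- g k n) * h a + g a n * h k"
        unfolding g'2 lin S_def .
      moreover have "g a n > 0" "g k n < 0" using a k by (auto simp: P_def N_def)
      ultimately show ?thesis unfolding lo_def
        by (simp add: divide_simps) (simp add: algebra_simps)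
    qed
    have tP: "t \<ge> lo i" if "i \<in> P" for i
      using that fin by (auto simp: t_def)
    have tN: "t \<le> lo k" if "k \<in> N" for k
    proof (cases "P = {}")
      case True then show ?thesis using that fin by (auto simp: t_def)
    next
      case False
      then have "Max (lo ` P) \<in> lo ` P" using fin by auto
      then obtain a where "a \<in> P" "Max (lo ` P) = lo a" by auto
      then show ?thesis using key[OF _ that] False by (simp add: t_def)
    qed
    define y' where "y' = y(n := t)"
    have "\<forall>i\<in>I. (\<Sum>j<Suc n. g i j * y' j) \<ge> h i"
    proof
      fix i assume i: "i \<in> I"
      have e: "(\<Sum>j<Suc n. g i j * y' j) = S i + g i n * t"
        by (simp add: y'_def S_def)
      consider "i \<in> Z" | "i \<in> P" | "i \<in> N" using i unfolding Z_def P_def N_def by force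
      then show "(\<Sum>j<Suc n. g i j * y' j) \<ge> h i"
      proof cases
        case 1 then show ?thesis using yZ[OF 1] e by (simp add: Z_def)
      next
        case 2
        then have "g i n > 0" by (simp add: P_def)
        with tP[OF 2] show ?thesis unfolding e lo_def by (simp add: divide_simps) (simp add: algebra_simps)
      next
        case 3
        then have "g i n < 0" by (simp add: N_def)
        with tN[OF 3] show ?thesis unfolding e lo_def by (simp add: divide_simps) (simp add: algebra_simps)
      qed
    qed
    then show False using Suc.prems(2) by blast
  qed
  from Suc.IH[OF finI' noty] obtain v where
    v: "\<forall>q\<in>I'. v q \<ge> 0" "\<forall>j<n. (\<Sum>q\<in>I'. v q * g' q j) = 0" "(\<Sum>q\<in>I'. v q * h' q) > 0"
    by blast
  define u where "u i = (if g i n = 0 then v (2*i) else 0)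
     + (if g i n > 0 then (\<Sum>k\<in>N. v (2*prod_encode (i,k)+1) * (- g k n)) else 0)
     + (if g i n < 0 then (\<Sum>a\<in>P. v (2*prod_encode (a,i)+1) * g a n) else 0)" for i
  have ident: "(\<Sum>i\<in>I. u i * w i) = (\<Sum>i\<in>Z. v (2*i) * w i)
      + (\<Sum>a\<in>P. \<Sum>k\<in>N. v (2*prod_encode (a,k)+1) * ((- g k n) * w a + g a n * w k))" for w
  proof -
    have "(\<Sum>i\<in>I. u i * w i) = (\<Sum>i\<in>I. (if g i n = 0 then v (2*i) * w i else 0))
       + (\<Sum>i\<in>I. (if g i n > 0 then (\<Sum>k\<in>N. v (2*prod_encode (i,k)+1) * (- g k n)) * w i else 0))
       + (\<Sum>i\<in>I. (if g i n < 0 then (\<Sum>a\<in>P. v (2*prod_encode (a,i)+1) * g a n) * w i else 0))"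
      unfolding u_def sum.distrib[symmetric] by (intro sum.cong refl) (auto simp: algebra_simps)
    also have "(\<Sum>i\<in>I. (if g i n = 0 then v (2*i) * w i else 0)) = (\<Sum>i\<in>Z. v (2*i) * w i)"
      unfolding Z_def using Suc.prems(1) by (simp add: sum.inter_filter)
    also have "(\<Sum>i\<in>I. (if g i n > 0 then (\<Sum>k\<in>N. v (2*prod_encode (i,k)+1) * (- g k n)) * w i else 0))
        = (\<Sum>a\<in>P. (\<Sum>k\<in>N. v (2*prod_encode (a,k)+1) * (- g k n)) * w a)"
      unfolding P_def using Suc.prems(1) by (simp only: sum.inter_filter)
    also have "\<dots> = (\<Sum>a\<in>P. \<Sum>k\<in>N. v (2*prod_encode (a,k)+1) * (- g k n) * w a)"
      by (simp add: sum_distrib_right)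
    also have "(\<Sum>i\<in>I. (if g i n < 0 then (\<Sum>a\<in>P. v (2*prod_encode (a,i)+1) * g a n) * w i else 0))
        = (\<Sum>k\<in>N. (\<Sum>a\<in>P. v (2*prod_encode (a,k)+1) * g a n) * w k)"
      unfolding N_def using Suc.prems(1) by (simp only: sum.inter_filter)
    also have "\<dots> = (\<Sum>k\<in>N. \<Sum>a\<in>P. v (2*prod_encode (a,k)+1) * g a n * w k)"
      by (simp add: sum_distrib_right)
    also have "\<dots> = (\<Sum>a\<in>P. \<Sum>k\<in>N. v (2*prod_encode (a,k)+1) * g a n * w k)"
      by (rule sum.swap)
    finally show ?thesis
      by (simp add: sum.distrib[symmetric] algebra_simps)
  qed
  have split: "(\<Sum>q\<in>I'. F q) = (\<Sum>i\<in>Z. F (2*i)) + (\<Sum>i\<in>P. \<Sum>k\<in>N. F (2 * prod_encode (i,k) + 1))"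
    for F :: "nat \<Rightarrow> real" unfolding I'_def using sum_split_I[OF fin] by simp
  show ?case
  proof (intro exI[of _ u] conjI allI impI ballI)
    fix i assume i: "i \<in> I"
    have a: "v (2*i) \<ge> 0" if "g i n = 0" using v(1) i that unfolding I'_def Z_def by auto
    have b: "(\<Sum>k\<in>N. v (2*prod_encode (i,k)+1) * (- g k n)) \<ge> 0" if "g i n > 0"
    proof (intro sum_nonneg mult_nonneg_nonneg)
      fix k assume "k \<in> N"
      then show "v (2*prod_encode (i,k)+1) \<ge> 0" "- g k n \<ge> 0"
        using v(1) i that unfolding I'_def P_def N_def by force+
    qed
    have c: "(\<Sum>a\<in>P. v (2*prod_encode (a,i)+1) * g a n) \<ge> 0" if "g i n < 0"
    proof (intro sum_nonneg mult_nonneg_nonneg)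
      fix a assume "a \<in> P"
      then show "v (2*prod_encode (a,i)+1) \<ge> 0" "g a n \<ge> 0"
        using v(1) i that unfolding I'_def P_def N_def by force+
    qed
    show "u i \<ge> 0" unfolding u_def using a b c by auto
  next
    fix j assume j: "j < Suc n"
    show "(\<Sum>i\<in>I. u i * g i j) = 0"
    proof (cases "j = n")
      case True
      have "(\<Sum>i\<in>Z. v (2*i) * g i n) = 0" by (simp add: Z_def)
      then show ?thesis unfolding ident True by (simp add: algebra_simps)
    next
      case False
      with j have "j < n" by simp
      with v(2) have "(\<Sum>q\<in>I'. v q * g' q j) = 0" by blast
      then show ?thesis unfolding ident split g'1 g'2 by simp
    qed
  next
    show "(\<Sum>i\<in>I. u i * h i) > 0"
      using v(3) unfolding ident split g'1 g'2 by simp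
  qed
qed

definition indep :: "nat \<Rightarrow> nat \<Rightarrow> (nat \<Rightarrow> nat \<Rightarrow> real) \<Rightarrow> nat set \<Rightarrow> bool" where
  "indep p n g B \<longleftrightarrow> (\<forall>w. (\<forall>i<p. i \<notin> B \<longrightarrow> w i = 0) \<and> (\<forall>j<n. (\<Sum>i<p. w i * g i j) = 0) \<longrightarrow> (\<forall>i<p. w i = 0))"


lemma support_reduce:
  fixes g :: "nat \<Rightarrow> nat \<Rightarrow> real" and r u :: "nat \<Rightarrow> real"
  assumes "\<forall>i<p. u i \<ge> 0"
  and rec: "\<forall>w. (\<forall>i<p. w i \<ge> 0) \<and> (\<forall>j<n. (\<Sum>i<p. w i * g i j) = 0) \<longrightarrow> (\<Sum>i<p. w i * r i) \<le> 0"
  shows "\<exists>u'. (\<forall>i<p. u' i \<ge> 0) \<and> (\<forall>j<n. (\<Sum>i<p. u' i * g i j) = (\<Sum>i<p. u i * g i j))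
     \<and> (\<Sum>i<p. u' i * r i) \<ge> (\<Sum>i<p. u i * r i) \<and> indep p n g {i. u' i \<noteq> 0}"
  using assms(1)
proof (induction "card {i. i<p \<and> u i \<noteq> 0}" arbitrary: u rule: less_induct)
  case less
  show ?case
  proof (cases "indep p n g {i. u i \<noteq> 0}")
    case True
    then show ?thesis using less.prems by (intro exI[of _ u]) simp
  next
    case False
    then obtain w0 where w0: "\<forall>i<p. i \<notin> {i. u i \<noteq> 0} \<longrightarrow> w0 i = 0" "\<forall>j<n. (\<Sum>i<p. w0 i * g i j) = 0"
      and nz: "\<not> (\<forall>i<p. w0 i = 0)"
      unfolding indep_def by auto
    from nz obtain i0 where i0: "i0 < p" "w0 i0 \<noteq> 0" by auto
    have "\<exists>w. (\<forall>i<p. u i = 0 \<longrightarrow> w i = 0) \<and> (\<forall>j<n. (\<Sum>i<p. w i * g i j) = 0)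
          \<and> (\<exists>i<p. w i < 0) \<and> (\<Sum>i<p. w i * r i) \<ge> 0"
    proof (cases "(\<Sum>i<p. w0 i * r i) \<ge> 0")
      case True
      show ?thesis
      proof (cases "\<exists>i<p. w0 i < 0")
        case True
        with \<open>(\<Sum>i<p. w0 i * r i) \<ge> 0\<close> w0 show ?thesis by (intro exI[of _ w0]) auto
      next
        case False
        have "\<forall>i<p. w0 i \<ge> 0"
        proof (intro allI impI)
          fix i assume "i < p"
          then have "\<not> w0 i < 0" using False by blast
          then show "w0 i \<ge> 0" by simp
        qed
        with rec w0 have "(\<Sum>i<p. w0 i * r i) \<le> 0" by blast
        with True have z: "(\<Sum>i<p. - w0 i * r i) = 0" by (simp add: sum_negf)
        have k: "\<forall>j<n. (\<Sum>i<p. - w0 i * g i j) = 0" using w0(2) by (simp add: sum_negf)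
        have "- w0 i0 < 0" using \<open>\<forall>i<p. w0 i \<ge> 0\<close> i0 by force
        then show ?thesis using z k w0(1) i0 by (intro exI[of _ "\<lambda>i. - w0 i"]) auto
      qed
    next
      case False
      then have pos: "(\<Sum>i<p. - w0 i * r i) > 0" by (simp add: sum_negf)
      have k: "\<forall>j<n. (\<Sum>i<p. - w0 i * g i j) = 0" using w0(2) by (simp add: sum_negf)
      have "\<exists>i<p. - w0 i < 0"
      proof (rule ccontr)
        assume "\<not> (\<exists>i<p. - w0 i < 0)"
        have "\<forall>i<p. - w0 i \<ge> 0"
        proof (intro allI impI)
          fix i assume "i < p"
          show "- w0 i \<ge> 0"
          proof (rule ccontr)
            assume "\<not> - w0 i \<ge> 0"
            then have "- w0 i < 0" by simp
            then have "\<exists>i<p. - w0 i < 0" using \<open>i < p\<close> by auto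
            then show False using \<open>\<not> (\<exists>i<p. - w0 i < 0)\<close> by simp
          qed
        qed
        with rec[rule_format, of "\<lambda>i. - w0 i"] k have "(\<Sum>i<p. - w0 i * r i) \<le> 0" by blast
        with pos show False by simp
      qed
      then show ?thesis using pos k w0(1) by (intro exI[of _ "\<lambda>i. - w0 i"]) auto
    qed
    then obtain w where w: "\<forall>i<p. u i = 0 \<longrightarrow> w i = 0" "\<forall>j<n. (\<Sum>i<p. w i * g i j) = 0"
      "\<exists>i<p. w i < 0" "(\<Sum>i<p. w i * r i) \<ge> 0" by blast
    define Ng where "Ng = {i. i < p \<and> w i < 0}"
    have finN: "finite Ng" "Ng \<noteq> {}" using w(3) by (auto simp: Ng_def)
    define lam where "lam = Min ((\<lambda>i. u i / (- w i)) ` Ng)"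
    have "lam \<in> (\<lambda>i. u i / (- w i)) ` Ng" unfolding lam_def using finN by simp
    then obtain i1 where i1: "i1 \<in> Ng" "lam = u i1 / (- w i1)" by blast
    have lam_le: "lam \<le> u i / (- w i)" if "i \<in> Ng" for i
      unfolding lam_def using finN that by simp
    have wis: "w i1 < 0" "i1 < p" using i1 by (auto simp: Ng_def)
    have lam0: "lam \<ge> 0" unfolding i1(2) using wis less.prems by (intro divide_nonneg_pos) auto
    define u2 where "u2 i = u i + lam * w i" for i
    have u2nn: "\<forall>i<p. u2 i \<ge> 0"
    proof (intro allI impI)
      fix i assume ip: "i < p"
      show "u2 i \<ge> 0"
      proof (cases "w i < 0")
        case True
        then have "lam \<le> u i / (- w i)" using lam_le ip by (simp add: Ng_def)
        with True show ?thesis unfolding u2_def by (simp add: divide_simps algebra_simps)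
      next
        case False
        then show ?thesis unfolding u2_def using lam0 less.prems ip by simp
      qed
    qed
    have u2is: "u2 i1 = 0" unfolding u2_def i1(2) using wis by (simp add: divide_simps)
    have uis: "u i1 \<noteq> 0" using w(1) wis by auto
    have sub: "{i. i<p \<and> u2 i \<noteq> 0} \<subset> {i. i<p \<and> u i \<noteq> 0}"
    proof
      show "{i. i<p \<and> u2 i \<noteq> 0} \<subseteq> {i. i<p \<and> u i \<noteq> 0}"
        using w(1) unfolding u2_def by auto
      show "{i. i<p \<and> u2 i \<noteq> 0} \<noteq> {i. i<p \<and> u i \<noteq> 0}"
      proof
        assume eq: "{i. i<p \<and> u2 i \<noteq> 0} = {i. i<p \<and> u i \<noteq> 0}"
        have "i1 \<in> {i. i<p \<and> u i \<noteq> 0}" using uis wis by simp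
        then have "i1 \<in> {i. i<p \<and> u2 i \<noteq> 0}" by (simp only: eq)
        then show False using u2is by simp
      qed
    qed
    have card: "card {i. i<p \<and> u2 i \<noteq> 0} < card {i. i<p \<and> u i \<noteq> 0}"
      by (rule psubset_card_mono[OF _ sub]) simp
    from less.hyps[OF card u2nn] obtain u' where u':
      "\<forall>i<p. u' i \<ge> 0" "\<forall>j<n. (\<Sum>i<p. u' i * g i j) = (\<Sum>i<p. u2 i * g i j)"
      "(\<Sum>i<p. u' i * r i) \<ge> (\<Sum>i<p. u2 i * r i)" "indep p n g {i. u' i \<noteq> 0}" by blast
    have e1: "(\<Sum>i<p. u2 i * g i j) = (\<Sum>i<p. u i * g i j) + lam * (\<Sum>i<p. w i * g i j)" for j
      unfolding u2_def by (simp add: sum.distrib sum_distrib_left algebra_simps)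
    have e2: "(\<Sum>i<p. u2 i * r i) = (\<Sum>i<p. u i * r i) + lam * (\<Sum>i<p. w i * r i)"
      unfolding u2_def by (simp add: sum.distrib sum_distrib_left algebra_simps)
    have "lam * (\<Sum>i<p. w i * r i) \<ge> 0" using lam0 w(4) by simp
    then show ?thesis using u' e1 e2 w(2) by (intro exI[of _ u']) auto
  qed
qed


lemma det_bound:
  fixes M :: "real Matrix.mat"
  assumes M: "M \<in> carrier_mat k k" and b: "\<And>i j. i < k \<Longrightarrow> j < k \<Longrightarrow> \<bar>M $$ (i,j)\<bar> \<le> \<gamma>"
  shows "\<bar>Determinant.det M\<bar> \<le> fact k * \<gamma> ^ k"
proof -
  let ?P = "{p. p permutes {0..<k}}"
  have "\<bar>Determinant.det M\<bar> = \<bar>\<Sum>p\<in>?P. signof p * (\<Prod>i=0..<k. M $$ (i, p i))\<bar>"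
    by (simp add: det_def'[OF M])
  also have "\<dots> \<le> (\<Sum>p\<in>?P. \<bar>signof p * (\<Prod>i=0..<k. M $$ (i, p i))\<bar>)"
    by (rule sum_abs)
  also have "\<dots> \<le> (\<Sum>p\<in>?P. \<gamma> ^ k)"
  proof (rule sum_mono)
    fix p assume p: "p \<in> ?P"
    have "\<bar>signof p * (\<Prod>i=0..<k. M $$ (i, p i))\<bar> = (\<Prod>i=0..<k. \<bar>M $$ (i, p i)\<bar>)"
      by (simp add: abs_mult abs_prod sign_def)
    also have "\<dots> \<le> (\<Prod>i=0..<k. \<gamma>)"
    proof (rule prod_mono)
      fix i assume i: "i \<in> {0..<k}"
      then have "p i \<in> {0..<k}" using p by (simp add: permutes_in_image)
      then show "0 \<le> \<bar>M $$ (i, p i)\<bar> \<and> \<bar>M $$ (i, p i)\<bar> \<le> \<gamma>" using b i by auto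
    qed
    finally show "\<bar>signof p * (\<Prod>i=0..<k. M $$ (i, p i))\<bar> \<le> \<gamma> ^ k" by simp
  qed
  also have "\<dots> = fact k * \<gamma> ^ k"
    by (simp add: card_permutations)
  finally show ?thesis .
qed

lemma mult_mat_vec_index:
  fixes A :: "real Matrix.mat"
  assumes "A \<in> carrier_mat p p" "v \<in> carrier_vec p" "i < p"
  shows "(A *\<^sub>v v) $ i = (\<Sum>k<p. A $$ (i,k) * v $ k)"
  using assms by (simp add: scalar_prod_def atLeast0LessThan)

lemma Ints_floor_eq: "(x::real) \<in> \<int> \<Longrightarrow> real_of_int \<lfloor>x\<rfloor> = x"
  by (metis Ints_cases floor_of_int)

lemma cramer_core:
  fixes g :: "nat \<Rightarrow> nat \<Rightarrow> real" and u :: "nat \<Rightarrow> real" and L Mt \<gamma> :: real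
  assumes L: "L \<ge> 1" and intg: "\<And>i j. i<p \<Longrightarrow> j<n \<Longrightarrow> L * g i j \<in> \<int>"
    and bnd: "\<And>i j. i<p \<Longrightarrow> j<n \<Longrightarrow> \<bar>L * g i j\<bar> \<le> Mt" and Mt0: "Mt \<ge> 0"
    and \<gamma>: "real n * Mt^2 \<le> \<gamma>" "L * Mt \<le> \<gamma>" "1 \<le> \<gamma>"
    and ind: "indep p n g B" and supp: "\<And>i. i<p \<Longrightarrow> i \<notin> B \<Longrightarrow> u i = 0"
    and c1: "(\<Sum>j<n. \<bar>\<Sum>i<p. u i * g i j\<bar>) \<le> 1"
    and k: "k < p"
  shows "\<bar>u k\<bar> \<le> fact p * \<gamma> ^ p"
proof -
  define c where "c j = (\<Sum>i<p. u i * g i j)" for j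
  define Gm :: "real Matrix.mat" where "Gm = Matrix.mat p p (\<lambda>(i,k). if i\<in>B \<and> k\<in>B then (\<Sum>j<n. (L * g i j) * (L * g k j)) else if i = k then 1 else 0)"
  define Gi :: "int Matrix.mat" where "Gi = Matrix.mat p p (\<lambda>(i,k). if i\<in>B \<and> k\<in>B then (\<Sum>j<n. \<lfloor>L * g i j\<rfloor> * \<lfloor>L * g k j\<rfloor>) else if i = k then 1 else 0)"
  define uv where "uv = Matrix.vec p u"
  define bv where "bv = Matrix.vec p (\<lambda>i. if i \<in> B then (\<Sum>j<n. (L * g i j) * (L * c j)) else 0)"
  have Gm: "Gm \<in> carrier_mat p p" unfolding Gm_def by simp
  have uvc: "uv \<in> carrier_vec p" unfolding uv_def by simp
  have Gu: "Gm *\<^sub>v uv = bv"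
  proof (rule eq_vecI)
    show "dim_vec (Gm *\<^sub>v uv) = dim_vec bv" using Gm by (simp add: bv_def)
    fix i assume "i < dim_vec bv"
    then have i: "i < p" by (simp add: bv_def)
    have "(Gm *\<^sub>v uv) $ i = (\<Sum>k<p. Gm $$ (i,k) * uv $ k)" by (rule mult_mat_vec_index[OF Gm uvc i])
    also have "\<dots> = bv $ i"
    proof (cases "i \<in> B")
      case True
      have "(\<Sum>k<p. Gm $$ (i,k) * uv $ k) = (\<Sum>k<p. \<Sum>j<n. (L * g i j) * (L * g k j) * u k)"
      proof (rule sum.cong[OF refl])
        fix k assume "k \<in> {..<p}"
        then show "Gm $$ (i,k) * uv $ k = (\<Sum>j<n. (L * g i j) * (L * g k j) * u k)"
          using True i supp[of k] by (auto simp: Gm_def uv_def sum_distrib_right)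
      qed
      also have "\<dots> = (\<Sum>j<n. \<Sum>k<p. (L * g i j) * (L * g k j) * u k)" by (rule sum.swap)
      also have "\<dots> = (\<Sum>j<n. (L * g i j) * (L * c j))"
        by (simp add: c_def sum_distrib_left mult_ac)
      finally show ?thesis using True i by (simp add: bv_def)
    next
      case False
      have "(\<Sum>k<p. Gm $$ (i,k) * uv $ k) = (\<Sum>k<p. if k = i then u i else 0)"
        by (rule sum.cong[OF refl]) (use False i in \<open>auto simp: Gm_def uv_def\<close>)
      also have "\<dots> = 0" using i supp[OF i False] by simp
      finally show ?thesis using False i by (simp add: bv_def)
    qed
    finally show "(Gm *\<^sub>v uv) $ i = bv $ i" .
  qed
  have GmGi: "Gm = map_mat real_of_int Gi"
    by (rule eq_matI) (auto simp: Gm_def Gi_def Ints_floor_eq intg)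
  have detne: "Determinant.det Gm \<noteq> 0"
  proof
    assume "Determinant.det Gm = 0"
    then obtain v where v: "v \<in> carrier_vec p" "v \<noteq> 0\<^sub>v p" "Gm *\<^sub>v v = 0\<^sub>v p"
      using det_0_iff_vec_prod_zero[OF Gm] by blast
    define w where "w i = (if i < p \<and> i \<in> B then v $ i else 0)" for i
    have row0: "(\<Sum>k<p. Gm $$ (i,k) * v $ k) = 0" if "i < p" for i
      using mult_mat_vec_index[OF Gm v(1) that] v(3) that by simp
    have vw: "v $ i = w i" if "i < p" for i
    proof (cases "i \<in> B")
      case True then show ?thesis using that by (simp add: w_def)
    next
      case False
      have "(\<Sum>k<p. Gm $$ (i,k) * v $ k) = (\<Sum>k<p. if k = i then v $ i else 0)"
        by (rule sum.cong[OF refl]) (use False that in \<open>auto simp: Gm_def\<close>)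
      then have "v $ i = 0" using row0[OF that] that by simp
      then show ?thesis using False by (simp add: w_def)
    qed
    define T where "T j = (\<Sum>k<p. L * g k j * w k)" for j
    have rowB: "(\<Sum>j<n. L * g i j * T j) = 0" if "i < p" "i \<in> B" for i
    proof -
      have "(\<Sum>k<p. Gm $$ (i,k) * v $ k) = (\<Sum>k<p. \<Sum>j<n. L * g i j * (L * g k j * w k))"
      proof (rule sum.cong[OF refl])
        fix k assume k: "k \<in> {..<p}"
        show "Gm $$ (i,k) * v $ k = (\<Sum>j<n. L * g i j * (L * g k j * w k))"
          using that k vw[of k] by (auto simp: Gm_def w_def sum_distrib_right sum_distrib_left mult_ac)
      qed
      also have "\<dots> = (\<Sum>j<n. L * g i j * T j)"
        by (subst sum.swap) (simp add: T_def sum_distrib_left)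
      finally show ?thesis using row0[OF that(1)] by simp
    qed
    have "(\<Sum>i<p. w i * (\<Sum>j<n. L * g i j * T j)) = 0"
      by (rule sum.neutral) (auto simp: w_def rowB)
    moreover have "(\<Sum>i<p. w i * (\<Sum>j<n. L * g i j * T j)) = (\<Sum>j<n. T j ^ 2)"
      by (simp add: sum_distrib_left T_def power2_eq_square sum_distrib_right mult_ac)
         (subst sum.swap, simp add: mult_ac)
    ultimately have "(\<Sum>j<n. T j ^ 2) = 0" by simp
    then have T0: "T j = 0" if "j < n" for j
      using sum_nonneg_eq_0_iff[of "{..<n}" "\<lambda>j. T j ^ 2"] that by simp
    have pre: "(\<forall>i<p. i \<notin> B \<longrightarrow> w i = 0) \<and> (\<forall>j<n. (\<Sum>i<p. w i * g i j) = 0)"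
    proof (intro conjI allI impI)
      fix j assume j: "j < n"
      have "L * (\<Sum>i<p. w i * g i j) = T j" by (simp add: T_def sum_distrib_left mult_ac)
      then show "(\<Sum>i<p. w i * g i j) = 0" using T0[OF j] L by simp
    qed (simp add: w_def)
    have "\<forall>i<p. w i = 0"
      using ind[unfolded indep_def, rule_format, OF pre] by blast
    then have "v = 0\<^sub>v p"
      by (intro eq_vecI) (use v(1) vw in auto)
    with v(2) show False by simp
  qed
  have detint: "\<bar>Determinant.det Gm\<bar> \<ge> 1"
  proof -
    have "Determinant.det Gm = real_of_int (Determinant.det Gi)"
      unfolding GmGi by (rule of_int_hom.hom_det)
    moreover have "Determinant.det Gi \<noteq> 0" using detne calculation by auto
    ultimately show ?thesis by linarith
  qed
  have cr: "Determinant.det (replace_col Gm bv k) = u k * Determinant.det Gm"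
    using cramer_lemma_mat[OF Gm uvc k] Gu by (simp add: uv_def k)
  have cb: "\<bar>c j\<bar> \<le> 1" if "j < n" for j
  proof -
    have "\<bar>c j\<bar> \<le> (\<Sum>j<n. \<bar>c j\<bar>)"
      using that by (intro member_le_sum) auto
    then show ?thesis using c1 by (simp add: c_def)
  qed
  have ent: "\<bar>replace_col Gm bv k $$ (i,j)\<bar> \<le> \<gamma>" if ij: "i < p" "j < p" for i j
  proof (cases "j = k")
    case True
    have "\<bar>bv $ i\<bar> \<le> \<gamma>"
    proof (cases "i \<in> B")
      case True
      have "\<bar>\<Sum>j<n. (L * g i j) * (L * c j)\<bar> \<le> (\<Sum>j<n. Mt * (L * \<bar>c j\<bar>))"
      proof (rule order_trans[OF sum_abs], rule sum_mono)
        fix j assume j: "j \<in> {..<n}"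
        have "\<bar>(L * g i j) * (L * c j)\<bar> = \<bar>L * g i j\<bar> * (L * \<bar>c j\<bar>)" using L by (simp add: abs_mult)
        also have "\<dots> \<le> Mt * (L * \<bar>c j\<bar>)"
          using bnd[of i j] ij j L by (intro mult_right_mono) auto
        finally show "\<bar>(L * g i j) * (L * c j)\<bar> \<le> Mt * (L * \<bar>c j\<bar>)" .
      qed
      also have "\<dots> = Mt * L * (\<Sum>j<n. \<bar>c j\<bar>)" by (simp add: sum_distrib_left mult_ac)
      also have "\<dots> \<le> Mt * L * 1"
        using c1 L Mt0 by (intro mult_left_mono) (auto simp: c_def)
      finally show ?thesis using True ij \<gamma> by (simp add: bv_def mult_ac)
    next
      case False then show ?thesis using ij \<gamma> by (simp add: bv_def)
    qed
    then show ?thesis using True ij Gm by (simp add: replace_col_def bv_def)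
  next
    case False
    have "\<bar>Gm $$ (i,j)\<bar> \<le> \<gamma>"
    proof (cases "i \<in> B \<and> j \<in> B")
      case True
      have "\<bar>\<Sum>l<n. (L * g i l) * (L * g j l)\<bar> \<le> (\<Sum>l<n. Mt * Mt)"
      proof (rule order_trans[OF sum_abs], rule sum_mono)
        fix l assume l: "l \<in> {..<n}"
        have "\<bar>(L * g i l) * (L * g j l)\<bar> = \<bar>L * g i l\<bar> * \<bar>L * g j l\<bar>" by (simp add: abs_mult)
        also have "\<dots> \<le> Mt * Mt"
          using bnd[of i l] bnd[of j l] ij l by (intro mult_mono) auto
        finally show "\<bar>(L * g i l) * (L * g j l)\<bar> \<le> Mt * Mt" .
      qed
      also have "\<dots> = real n * Mt^2" by (simp add: power2_eq_square)
      finally show ?thesis using True ij \<gamma> by (simp add: Gm_def)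
    next
      case False then show ?thesis using ij \<gamma> by (auto simp: Gm_def)
    qed
    then show ?thesis using False ij Gm by (simp add: replace_col_def)
  qed
  have rc: "replace_col Gm bv k \<in> carrier_mat p p" using Gm by (simp add: replace_col_def)
  have "\<bar>u k\<bar> \<le> \<bar>u k\<bar> * \<bar>Determinant.det Gm\<bar>"
    using detint by (simp add: mult_le_cancel_left1)
  also have "\<dots> = \<bar>Determinant.det (replace_col Gm bv k)\<bar>" by (simp add: cr abs_mult)
  also have "\<dots> \<le> fact p * \<gamma> ^ p" by (rule det_bound[OF rc ent])
  finally show ?thesis .
qed


definition Hc :: "nat \<Rightarrow> real \<Rightarrow> real" where
  "Hc p \<gamma> = real p * fact p * \<gamma> ^ p"

lemma swap_lemma:
  fixes u y :: "nat \<Rightarrow> real" and g :: "nat \<Rightarrow> nat \<Rightarrow> real"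
  shows "(\<Sum>j<n. (\<Sum>i<p. u i * g i j) * y j) = (\<Sum>i<p. u i * (\<Sum>j<n. g i j * y j))"
  by (simp add: sum_distrib_left sum_distrib_right mult_ac) (rule sum.swap)

lemma delta_sum:
  fixes y :: "nat \<Rightarrow> real"
  assumes "j < n"
  shows "(\<Sum>j'<n. (if j' = j then c else 0) * y j') = c * y j"
proof -
  have "(\<Sum>j'<n. (if j' = j then c else 0) * y j') = (\<Sum>j'<n. if j' = j then c * y j else 0)"
    by (rule sum.cong) auto
  also have "\<dots> = c * y j" using assms by simp
  finally show ?thesis .
qed

lemma delta_sum2:
  fixes y :: "nat \<Rightarrow> real"
  assumes "j < n"
  shows "(\<Sum>j'<n. y j' * (if j = j' then c else 0)) = c * y j"
proof -
  have "(\<Sum>j'<n. y j' * (if j = j' then c else 0)) = (\<Sum>j'<n. if j' = j then c * y j else 0)"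
    by (rule sum.cong) auto
  also have "\<dots> = c * y j" using assms by simp
  finally show ?thesis .
qed

lemma cramer_bound:
  fixes g :: "nat \<Rightarrow> nat \<Rightarrow> real" and u :: "nat \<Rightarrow> real" and L Mt \<gamma> :: real
  assumes L: "L \<ge> 1" and intg: "\<And>i j. i<p \<Longrightarrow> j<n \<Longrightarrow> L * g i j \<in> \<int>"
    and bnd: "\<And>i j. i<p \<Longrightarrow> j<n \<Longrightarrow> \<bar>L * g i j\<bar> \<le> Mt" and Mt0: "Mt \<ge> 0"
    and \<gamma>: "real n * Mt^2 \<le> \<gamma>" "L * Mt \<le> \<gamma>" "1 \<le> \<gamma>"
    and ind: "indep p n g B" and supp: "\<And>i. i<p \<Longrightarrow> i \<notin> B \<Longrightarrow> u i = 0"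
  shows "(\<Sum>i<p. \<bar>u i\<bar>) \<le> Hc p \<gamma> * (\<Sum>j<n. \<bar>\<Sum>i<p. u i * g i j\<bar>)"
proof -
  define nc where "nc = (\<Sum>j<n. \<bar>\<Sum>i<p. u i * g i j\<bar>)"
  have nc0: "nc \<ge> 0" unfolding nc_def by (simp add: sum_nonneg)
  have Hc0: "Hc p \<gamma> \<ge> 0" unfolding Hc_def using \<gamma> by simp
  show ?thesis
  proof (cases "nc = 0")
    case True
    then have c0: "\<forall>j<n. (\<Sum>i<p. u i * g i j) = 0"
      unfolding nc_def using sum_nonneg_eq_0_iff[of "{..<n}" "\<lambda>j. \<bar>\<Sum>i<p. u i * g i j\<bar>"] by simp
    have "(\<forall>i<p. i \<notin> B \<longrightarrow> u i = 0) \<and> (\<forall>j<n. (\<Sum>i<p. u i * g i j) = 0)"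
      using supp c0 by blast
    then have "\<forall>i<p. u i = 0" using ind[unfolded indep_def, rule_format] by blast
    then show ?thesis using True Hc0 by (simp add: nc_def[symmetric])
  next
    case False
    then have ncp: "nc > 0" using nc0 by simp
    define v where "v i = u i / nc" for i
    have cv: "(\<Sum>i<p. v i * g i j) = (\<Sum>i<p. u i * g i j) / nc" for j
      by (simp add: v_def sum_divide_distrib)
    have c1: "(\<Sum>j<n. \<bar>\<Sum>i<p. v i * g i j\<bar>) \<le> 1"
      using ncp by (simp add: cv sum_divide_distrib[symmetric] nc_def[symmetric])
    have vb: "\<bar>v k\<bar> \<le> fact p * \<gamma> ^ p" if "k < p" for k
      by (rule cramer_core[OF L intg bnd Mt0 \<gamma> ind _ c1 that]) (auto simp: v_def supp)
    have "(\<Sum>i<p. \<bar>u i\<bar>) = (\<Sum>i<p. nc * \<bar>v i\<bar>)"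
      using ncp by (intro sum.cong) (auto simp: v_def)
    also have "\<dots> \<le> (\<Sum>i<p. nc * (fact p * \<gamma> ^ p))"
      by (intro sum_mono mult_left_mono vb nc0) auto
    also have "\<dots> = Hc p \<gamma> * nc" by (simp add: Hc_def mult_ac)
    finally show ?thesis by (simp add: nc_def)
  qed
qed


lemma sum3:
  fixes F :: "nat \<Rightarrow> real"
  shows "(\<Sum>q\<in>{..<p+n+n}. F q) = (\<Sum>i<p. F i) + (\<Sum>j<n. F (p+j)) + (\<Sum>j<n. F (p+n+j))"
proof -
  have a: "(\<Sum>q<a+b. F q) = (\<Sum>q<a. F q) + (\<Sum>j<b. F (a+j))" for a b
    by (induction b) (simp_all add: add.assoc)
  show ?thesis using a[of "p+n" n] a[of p n] by simp
qed

lemma sum1: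
  fixes F :: "nat \<Rightarrow> real"
  shows "(\<Sum>q\<in>{..<p+1}. F q) = (\<Sum>i<p. F i) + F p"
  by simp

lemma hoffman:
  fixes g :: "nat \<Rightarrow> nat \<Rightarrow> real" and h yh yy :: "nat \<Rightarrow> real" and L Mt \<gamma> \<eta> :: real
  assumes L: "L \<ge> 1" and intg: "\<And>i j. i<p \<Longrightarrow> j<n \<Longrightarrow> L * g i j \<in> \<int>"
    and bnd: "\<And>i j. i<p \<Longrightarrow> j<n \<Longrightarrow> \<bar>L * g i j\<bar> \<le> Mt" and Mt0: "Mt \<ge> 0"
    and \<gamma>: "real n * Mt^2 \<le> \<gamma>" "L * Mt \<le> \<gamma>" "1 \<le> \<gamma>"
    and feas: "\<forall>i<p. (\<Sum>j<n. g i j * yy j) \<ge> h i"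
    and \<eta>: "\<eta> \<ge> 0" and apx: "\<forall>i<p. (\<Sum>j<n. g i j * yh j) \<ge> h i - \<eta>"
  shows "\<exists>y. (\<forall>i<p. (\<Sum>j<n. g i j * y j) \<ge> h i) \<and> (\<forall>j<n. \<bar>y j - yh j\<bar> \<le> Hc p \<gamma> * \<eta>)"
proof (rule ccontr)
  assume nex: "\<not> ?thesis"
  define T where "T = Hc p \<gamma> * \<eta>"
  have Hc0: "Hc p \<gamma> \<ge> 0" unfolding Hc_def using \<gamma> by simp
  have T0: "T \<ge> 0" unfolding T_def using Hc0 \<eta> by simp
  define G where "G q j = (if q < p then g q j else if q < p + n then (if j = q - p then 1 else 0)
      else (if j = q - p - n then -1 else 0))" for q j
  define H where "H q = (if q < p then h q else if q < p + n then yh (q - p) - T else - (yh (q - p - n) + T))" for q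
  have infeas: "\<not> (\<exists>y. \<forall>q\<in>{..<p+n+n}. (\<Sum>j<n. G q j * y j) \<ge> H q)"
  proof
    assume "\<exists>y. \<forall>q\<in>{..<p+n+n}. (\<Sum>j<n. G q j * y j) \<ge> H q"
    then obtain y where y: "\<And>q. q < p+n+n \<Longrightarrow> (\<Sum>j<n. G q j * y j) \<ge> H q" by auto
    have "\<forall>i<p. (\<Sum>j<n. g i j * y j) \<ge> h i"
    proof (intro allI impI)
      fix i assume "i < p" then show "(\<Sum>j<n. g i j * y j) \<ge> h i" using y[of i] by (simp add: G_def H_def)
    qed
    moreover have "\<forall>j<n. \<bar>y j - yh j\<bar> \<le> T"
    proof (intro allI impI)
      fix j assume j: "j < n"
      have "(\<Sum>j'<n. G (p+j) j' * y j') \<ge> H (p+j)" using y[of "p+j"] j by simp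
      then have 1: "y j \<ge> yh j - T" using j by (simp add: G_def H_def delta_sum)
      have "(\<Sum>j'<n. G (p+n+j) j' * y j') \<ge> H (p+n+j)" using y[of "p+n+j"] j by simp
      then have 2: "- y j \<ge> - (yh j + T)" using j by (simp add: G_def H_def delta_sum)
      from 1 2 show "\<bar>y j - yh j\<bar> \<le> T" by linarith
    qed
    ultimately show False using nex unfolding T_def by blast
  qed
  obtain U where U: "\<forall>q\<in>{..<p+n+n}. U q \<ge> 0" "\<forall>j<n. (\<Sum>q\<in>{..<p+n+n}. U q * G q j) = 0"
    "(\<Sum>q\<in>{..<p+n+n}. U q * H q) > 0"
    using farkas[OF _ infeas] by blast
  define c where "c j = (\<Sum>i<p. U i * g i j)" for j
  have cj: "c j = U (p+n+j) - U (p+j)" if j: "j < n" for j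
  proof -
    have "(\<Sum>q\<in>{..<p+n+n}. U q * G q j) = c j + U (p+j) - U (p+n+j)"
      unfolding sum3 using j by (simp add: G_def c_def delta_sum2)
    then show ?thesis using U(2) j by simp
  qed
  define r where "r i = h i - (\<Sum>j<n. g i j * yh j)" for i
  have rle: "r i \<le> \<eta>" if "i < p" for i using apx that unfolding r_def by force
  have Uge: "U i \<ge> 0" if "i < p" for i using U(1) that by simp
  have Ur: "(\<Sum>i<p. U i * r i) = (\<Sum>i<p. U i * h i) - (\<Sum>j<n. c j * yh j)"
    unfolding r_def c_def swap_lemma by (simp add: algebra_simps sum_subtractf sum_distrib_left)
  have UH: "(\<Sum>q\<in>{..<p+n+n}. U q * H q) = (\<Sum>i<p. U i * h i)
     + (\<Sum>j<n. U (p+j) * (yh j - T)) - (\<Sum>j<n. U (p+n+j) * (yh j + T))"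
  proof -
    have aux: "(\<Sum>j<n. U (p+n+j) * (- yh j - T)) = - (\<Sum>j<n. U (p+n+j) * (yh j + T))"
      unfolding sum_negf[symmetric] by (rule sum.cong) (auto simp: algebra_simps)
    show ?thesis unfolding sum3 using aux by (simp add: H_def)
  qed
  have "(\<Sum>j<n. U (p+j) * (yh j - T)) - (\<Sum>j<n. U (p+n+j) * (yh j + T))
      = - (\<Sum>j<n. (U (p+n+j) - U (p+j)) * yh j) - T * (\<Sum>j<n. U (p+j) + U (p+n+j))"
    by (simp add: algebra_simps sum_subtractf sum.distrib sum_distrib_left)
  also have "(\<Sum>j<n. (U (p+n+j) - U (p+j)) * yh j) = (\<Sum>j<n. c j * yh j)"
    by (rule sum.cong) (auto simp: cj)
  finally have main: "(\<Sum>i<p. U i * r i) > T * (\<Sum>j<n. U (p+j) + U (p+n+j))"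
    using U(3) unfolding UH Ur by linarith
  have cabs: "(\<Sum>j<n. \<bar>c j\<bar>) \<le> (\<Sum>j<n. U (p+j) + U (p+n+j))"
  proof (rule sum_mono)
    fix j assume "j \<in> {..<n}"
    then have "U (p+j) \<ge> 0" "U (p+n+j) \<ge> 0" "c j = U (p+n+j) - U (p+j)" using U(1) cj by auto
    then show "\<bar>c j\<bar> \<le> U (p+j) + U (p+n+j)" by linarith
  qed
  have rec: "\<forall>w. (\<forall>i<p. w i \<ge> 0) \<and> (\<forall>j<n. (\<Sum>i<p. w i * g i j) = 0) \<longrightarrow> (\<Sum>i<p. w i * r i) \<le> 0"
  proof (intro allI impI)
    fix w assume w: "(\<forall>i<p. w i \<ge> 0) \<and> (\<forall>j<n. (\<Sum>i<p. w i * g i j) = 0)"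
    have "(\<Sum>i<p. w i * r i) = (\<Sum>i<p. w i * h i) - (\<Sum>j<n. (\<Sum>i<p. w i * g i j) * yh j)"
      unfolding r_def swap_lemma by (simp add: algebra_simps sum_subtractf sum_distrib_left)
    also have "(\<Sum>j<n. (\<Sum>i<p. w i * g i j) * yh j) = 0" using w by simp
    also have "(\<Sum>i<p. w i * h i) \<le> (\<Sum>i<p. w i * (\<Sum>j<n. g i j * yy j))"
      using w feas by (intro sum_mono mult_left_mono) auto
    also have "\<dots> = (\<Sum>j<n. (\<Sum>i<p. w i * g i j) * yy j)" by (rule swap_lemma[symmetric])
    also have "\<dots> = 0" using w by simp
    finally show "(\<Sum>i<p. w i * r i) \<le> 0" by simp
  qed
  obtain u' where u': "\<forall>i<p. u' i \<ge> 0" "\<forall>j<n. (\<Sum>i<p. u' i * g i j) = (\<Sum>i<p. U i * g i j)"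
     "(\<Sum>i<p. u' i * r i) \<ge> (\<Sum>i<p. U i * r i)" "indep p n g {i. u' i \<noteq> 0}"
    using support_reduce[of p U n g r] Uge rec by blast
  have cb: "(\<Sum>i<p. \<bar>u' i\<bar>) \<le> Hc p \<gamma> * (\<Sum>j<n. \<bar>\<Sum>i<p. u' i * g i j\<bar>)"
    by (rule cramer_bound[OF L intg bnd Mt0 \<gamma> u'(4)]) auto
  also have "(\<Sum>j<n. \<bar>\<Sum>i<p. u' i * g i j\<bar>) = (\<Sum>j<n. \<bar>c j\<bar>)"
    using u'(2) by (simp add: c_def)
  finally have cb2: "(\<Sum>i<p. \<bar>u' i\<bar>) \<le> Hc p \<gamma> * (\<Sum>j<n. \<bar>c j\<bar>)" .
  have "(\<Sum>i<p. u' i * r i) \<le> (\<Sum>i<p. \<bar>u' i\<bar> * \<eta>)"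
    using u'(1) rle by (intro sum_mono) (simp add: mult_left_mono)
  also have "\<dots> = \<eta> * (\<Sum>i<p. \<bar>u' i\<bar>)" by (simp add: sum_distrib_left mult_ac)
  also have "\<dots> \<le> \<eta> * (Hc p \<gamma> * (\<Sum>j<n. \<bar>c j\<bar>))" by (rule mult_left_mono[OF cb2 \<eta>])
  also have "\<dots> = T * (\<Sum>j<n. \<bar>c j\<bar>)" by (simp add: T_def mult_ac)
  also have "\<dots> \<le> T * (\<Sum>j<n. U (p+j) + U (p+n+j))" by (rule mult_left_mono[OF cabs T0])
  finally show False using main u'(3) by linarith
qed


lemma bounded_poly:
  fixes g :: "nat \<Rightarrow> nat \<Rightarrow> real" and h yy :: "nat \<Rightarrow> real" and L Mt \<gamma> hb R :: real
  assumes L: "L \<ge> 1" and intg: "\<And>i j. i<p \<Longrightarrow> j<n \<Longrightarrow> L * g i j \<in> \<int>"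
    and bnd: "\<And>i j. i<p \<Longrightarrow> j<n \<Longrightarrow> \<bar>L * g i j\<bar> \<le> Mt" and Mt0: "Mt \<ge> 0"
    and \<gamma>: "real n * Mt^2 \<le> \<gamma>" "L * Mt \<le> \<gamma>" "1 \<le> \<gamma>"
    and feas: "\<forall>i<p. (\<Sum>j<n. g i j * yy j) \<ge> h i"
    and bdd: "\<forall>y. (\<forall>i<p. (\<Sum>j<n. g i j * y j) \<ge> h i) \<longrightarrow> (\<forall>j<n. \<bar>y j\<bar> \<le> R)"
    and hb: "\<forall>i<p. \<bar>h i\<bar> \<le> hb" "hb \<ge> 0"
    and y: "\<forall>i<p. (\<Sum>j<n. g i j * y j) \<ge> h i" and jj: "jj < n"
  shows "\<bar>y jj\<bar> \<le> Hc p \<gamma> * hb"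
proof -
  have side: "s * y jj \<le> Hc p \<gamma> * hb" if s: "s = 1 \<or> s = -1" for s :: real
  proof -
    define G where "G q j = (if q < p then g q j else (if j = jj then s else 0))" for q j
    define H where "H q = (if q < p then h q else R + 1)" for q
    have infeas: "\<not> (\<exists>y. \<forall>q\<in>{..<p+1}. (\<Sum>j<n. G q j * y j) \<ge> H q)"
    proof
      assume "\<exists>y. \<forall>q\<in>{..<p+1}. (\<Sum>j<n. G q j * y j) \<ge> H q"
      then obtain z where z: "\<And>q. q < p+1 \<Longrightarrow> (\<Sum>j<n. G q j * z j) \<ge> H q" by auto
      have "\<forall>i<p. (\<Sum>j<n. g i j * z j) \<ge> h i"
      proof (intro allI impI)
        fix i assume "i < p" then show "(\<Sum>j<n. g i j * z j) \<ge> h i" using z[of i] by (simp add: G_def H_def)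
      qed
      then have "\<bar>z jj\<bar> \<le> R" using bdd jj by blast
      moreover have "s * z jj \<ge> R + 1" using z[of p] jj by (simp add: G_def H_def delta_sum)
      ultimately show False using s by auto
    qed
    obtain U where U: "\<forall>q\<in>{..<p+1}. U q \<ge> 0" "\<forall>j<n. (\<Sum>q\<in>{..<p+1}. U q * G q j) = 0"
      "(\<Sum>q\<in>{..<p+1}. U q * H q) > 0"
      using farkas[OF _ infeas] by blast
    have kern: "(\<Sum>i<p. U i * g i j) + U p * (if j = jj then s else 0) = 0" if "j < n" for j
      using U(2) that by (simp add: G_def)
    have hsum: "(\<Sum>i<p. U i * h i) + U p * (R + 1) > 0"
      using U(3) by (simp add: H_def)
    have Uge: "U i \<ge> 0" if "i \<le> p" for i using U(1) that by simp
    have Up: "U p > 0"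
    proof (rule ccontr)
      assume "\<not> U p > 0"
      then have U0: "U p = 0" using Uge[of p] by simp
      have "(\<Sum>i<p. U i * h i) \<le> (\<Sum>i<p. U i * (\<Sum>j<n. g i j * yy j))"
        using Uge feas by (intro sum_mono mult_left_mono) auto
      also have "\<dots> = (\<Sum>j<n. (\<Sum>i<p. U i * g i j) * yy j)" by (rule swap_lemma[symmetric])
      also have "\<dots> = 0" using kern U0 by simp
      finally show False using hsum U0 by simp
    qed
    define u where "u i = U i / U p" for i
    have uker: "(\<Sum>i<p. u i * g i j) = - (if j = jj then s else 0)" if "j < n" for j
    proof -
      have "(\<Sum>i<p. u i * g i j) = (\<Sum>i<p. U i * g i j) / U p" by (simp add: u_def sum_divide_distrib)
      also have "(\<Sum>i<p. U i * g i j) = - (U p * (if j = jj then s else 0))" using kern[OF that] by linarith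
      also have "- (U p * (if j = jj then s else 0)) / U p = - (if j = jj then s else 0)" using Up by simp
      finally show ?thesis .
    qed
    have uge: "\<forall>i<p. u i \<ge> 0" using Uge Up by (simp add: u_def)
    obtain u' where u': "\<forall>i<p. u' i \<ge> 0" "\<forall>j<n. (\<Sum>i<p. u' i * g i j) = (\<Sum>i<p. u i * g i j)"
       "indep p n g {i. u' i \<noteq> 0}"
      using support_reduce[of p u n g "\<lambda>_. 0"] uge by auto
    have cb: "(\<Sum>i<p. \<bar>u' i\<bar>) \<le> Hc p \<gamma> * (\<Sum>j<n. \<bar>\<Sum>i<p. u' i * g i j\<bar>)"
      by (rule cramer_bound[OF L intg bnd Mt0 \<gamma> u'(3)]) auto
    also have "(\<Sum>j<n. \<bar>\<Sum>i<p. u' i * g i j\<bar>) = (\<Sum>j<n. if j = jj then 1 else 0)"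
      using u'(2) uker s by (intro sum.cong) auto
    also have "\<dots> = 1" using jj by simp
    finally have cb1: "(\<Sum>i<p. u' i) \<le> Hc p \<gamma>" using u'(1) by simp
    have "s * y jj = - (\<Sum>j<n. (\<Sum>i<p. u' i * g i j) * y j)"
    proof -
      have "(\<Sum>j<n. (\<Sum>i<p. u' i * g i j) * y j) = (\<Sum>j<n. (- (if j = jj then s else 0)) * y j)"
        using u'(2) uker by (intro sum.cong) auto
      also have "\<dots> = - s * y jj" using delta_sum[OF jj, of "-s" y] by (simp add: if_distrib cong: if_cong)
      finally show ?thesis by simp
    qed
    also have "\<dots> = - (\<Sum>i<p. u' i * (\<Sum>j<n. g i j * y j))" by (simp add: swap_lemma)
    also have "\<dots> \<le> - (\<Sum>i<p. u' i * h i)"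
      using u'(1) y by (simp, intro sum_mono mult_left_mono) auto
    also have "\<dots> \<le> (\<Sum>i<p. u' i * hb)"
      unfolding sum_negf[symmetric]
    proof (rule sum_mono)
      fix i assume "i \<in> {..<p}"
      then have "- h i \<le> hb" "u' i \<ge> 0" using hb u'(1) by auto
      then show "- (u' i * h i) \<le> u' i * hb" by (metis minus_mult_right mult_left_mono)
    qed
    also have "\<dots> = (\<Sum>i<p. u' i) * hb" by (simp add: sum_distrib_right)
    also have "\<dots> \<le> Hc p \<gamma> * hb" using cb1 hb(2) by (rule mult_right_mono)
    finally show ?thesis .
  qed
  show ?thesis using side[of 1] side[of "-1"] by linarith
qed


lemma size_int_bound: "real_of_int \<bar>z\<bar> + 1 \<le> 2 ^ size_int z"
proof -
  define t where "t = log 2 (real_of_int \<bar>z\<bar> + 1)"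
  have pos: "real_of_int \<bar>z\<bar> + 1 > 0" by simp
  have t0: "t \<ge> 0" unfolding t_def by simp
  have "real_of_int \<bar>z\<bar> + 1 = 2 powr t" unfolding t_def using pos by simp
  also have "\<dots> \<le> 2 powr (real (nat \<lceil>t\<rceil>))"
    by (rule powr_mono) (use t0 in \<open>auto intro: le_of_int_ceiling\<close>)
  also have "\<dots> = 2 ^ nat \<lceil>t\<rceil>" by (simp add: powr_realpow)
  also have "\<dots> \<le> 2 ^ size_int z"
  proof -
    have "nat \<lceil>t\<rceil> \<le> size_int z" unfolding size_int_def t_def by (rule le_add2)
    then show ?thesis by (rule power_increasing) simp
  qed
  finally show ?thesis .
qed

lemma size_rat_bounds:
  assumes q: "quotient_of q = (a, b)"
  shows "\<bar>real_of_rat q\<bar> \<le> 2 ^ size_rat q" "real_of_int b \<le> 2 ^ size_rat q" "b > 0"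
proof -
  have b: "b > 0" using quotient_of_denom_pos[OF q] .
  have sz: "size_rat q = size_int a + size_int b" unfolding size_rat_def q by simp
  have rq: "real_of_rat q = real_of_int a / real_of_int b"
    using quotient_of_div[OF q] by (simp add: of_rat_divide)
  have b1: "real_of_int b \<ge> 1" using b by simp
  have "\<bar>real_of_rat q\<bar> = real_of_int \<bar>a\<bar> / real_of_int b" unfolding rq abs_divide using b by simp
  also have "\<dots> \<le> real_of_int \<bar>a\<bar> / 1"
    using b1 by (intro divide_left_mono) auto
  also have "\<dots> \<le> 2 ^ size_int a" using size_int_bound[of a] by linarith
  also have "\<dots> \<le> 2 ^ size_rat q" unfolding sz by (rule power_increasing) auto
  finally show "\<bar>real_of_rat q\<bar> \<le> 2 ^ size_rat q" .
  have bb: "real_of_int \<bar>b\<bar> = real_of_int b" using b by simp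
  have "real_of_int b \<le> 2 ^ size_int b" using size_int_bound[of b] bb by linarith
  also have "\<dots> \<le> 2 ^ size_rat q" unfolding sz by (rule power_increasing) auto
  finally show "real_of_int b \<le> 2 ^ size_rat q" .
  show "b > 0" by (rule b)
qed

lemma abs_rat_le: "\<bar>real_of_rat q\<bar> \<le> 2 ^ size_rat q"
  using size_rat_bounds(1)[of q "fst (quotient_of q)" "snd (quotient_of q)"] by simp

lemma den_le: "real_of_int (snd (quotient_of q)) \<le> 2 ^ size_rat q"
  using size_rat_bounds(2)[of q "fst (quotient_of q)" "snd (quotient_of q)"] by simp

lemma den_pos: "snd (quotient_of q) > 0"
  using quotient_of_denom_pos[of q "fst (quotient_of q)" "snd (quotient_of q)"] by simp

lemma int_entry:
  assumes "snd (quotient_of q) dvd Lz"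
  shows "real_of_int Lz * real_of_rat q \<in> \<int>"
proof -
  obtain a b where q: "quotient_of q = (a, b)" by (cases "quotient_of q")
  have b: "b > 0" using quotient_of_denom_pos[OF q] .
  have "b dvd Lz" using assms q by simp
  then obtain k where k: "Lz = b * k" by (rule dvdE)
  have rq: "real_of_rat q = real_of_int a / real_of_int b"
    using quotient_of_div[OF q] by (simp add: of_rat_divide)
  have "real_of_int Lz * real_of_rat q = real_of_int (k * a)" using b by (simp add: rq k)
  then show ?thesis by simp
qed

lemma size_pow2: "size_rat ((2::rat) ^ N) \<le> N + 4"
proof -
  have e: "(2::rat) ^ N = rat_of_int (2 ^ N)" by simp
  have s1: "size_int 1 = 2" by (simp add: size_int_def)
  have "log 2 (real_of_int \<bar>2 ^ N\<bar> + 1) \<le> real (N + 1)"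
  proof -
    have "real_of_int \<bar>2 ^ N\<bar> + 1 \<le> 2 ^ (N + 1)" by simp
    then have "log 2 (real_of_int \<bar>2 ^ N\<bar> + 1) \<le> log 2 (2 ^ (N+1))"
    proof -
      have "(0::real) \<le> real_of_int \<bar>2 ^ N\<bar>" by simp
      then have "0 < real_of_int \<bar>2 ^ N\<bar> + 1" by linarith
      then show ?thesis using log_le_cancel_iff[of 2 "real_of_int \<bar>2 ^ N\<bar> + 1" "2 ^ (N+1)"]
        \<open>real_of_int \<bar>2 ^ N\<bar> + 1 \<le> 2 ^ (N + 1)\<close> by simp
    qed
    moreover have "log 2 ((2::real) ^ (N+1)) = real (N+1)" by (rule log_pow_cancel) auto
    ultimately show ?thesis by linarith
  qed
  then have "\<lceil>log 2 (real_of_int \<bar>2 ^ N\<bar> + 1)\<rceil> \<le> int (N + 1)"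
    by (intro ceiling_le) simp
  then have n1: "nat \<lceil>log 2 (real_of_int \<bar>2 ^ N\<bar> + 1)\<rceil> \<le> N + 1" by (simp only: nat_le_iff)
  have "size_int (2 ^ N) = 1 + nat \<lceil>log 2 (real_of_int \<bar>2 ^ N\<bar> + 1)\<rceil>" by (simp only: size_int_def)
  with n1 have "size_int (2 ^ N) \<le> N + 2" by linarith
  moreover have q: "quotient_of ((2::rat)^N) = (2^N, 1)" unfolding e by (rule quotient_of_rat_of_int)
  moreover have "size_rat ((2::rat)^N) = size_int (2^N) + size_int 1" unfolding size_rat_def q by simp
  ultimately show ?thesis using s1 by linarith
qed

lemma nat_le_W: "n \<le> Sz \<Longrightarrow> real n \<le> (2::real) ^ Sz"
proof -
  assume "n \<le> Sz"
  have "real n \<le> 2 ^ n" using less_exp[of n] by (metis less_imp_le of_nat_less_numeral_power_cancel_iff of_nat_numeral)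
  also have "\<dots> \<le> 2 ^ Sz" using \<open>n \<le> Sz\<close> by (rule power_increasing) simp
  finally show ?thesis .
qed


definition trunc_v :: "nat \<Rightarrow> (nat \<Rightarrow> real) \<Rightarrow> nat \<Rightarrow> real" where
  "trunc_v n v = (\<lambda>j. if j < n then v j else 0)"

lemma trunc_vec_set: "trunc_v n v \<in> Defs.vec_set n"
  by (simp add: trunc_v_def Defs.vec_set_def)

lemma mat_vec_trunc: "mat_vec M n (trunc_v n v) i = mat_vec M n v i"
  unfolding mat_vec_def trunc_v_def by (rule sum.cong) auto

lemma ul_trunc: "ul_feasible m nx A a (trunc_v nx x) \<longleftrightarrow> ul_feasible m nx A a x"
  by (simp add: ul_feasible_def mat_vec_trunc)

lemma ll_trunc: "ll_feasible l nx ny C D b (trunc_v nx x) (trunc_v ny y) \<longleftrightarrow> ll_feasible l nx ny C D b x y"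
  by (simp add: ll_feasible_def mat_vec_trunc)

lemma trunc_eq: "j < n \<Longrightarrow> trunc_v n v j = v j"
  by (simp add: trunc_v_def)

lemma entry_le_mat: "i < r \<Longrightarrow> j < c \<Longrightarrow> size_rat (M i j) \<le> size_mat r c M"
proof -
  assume ij: "i < r" "j < c"
  have "size_rat (M i j) \<le> (\<Sum>j<c. size_rat (M i j))" using ij by (intro member_le_sum) auto
  also have "\<dots> \<le> (\<Sum>i<r. \<Sum>j<c. size_rat (M i j))" using ij by (intro member_le_sum) auto
  also have "\<dots> \<le> size_mat r c M" by (simp add: size_mat_def)
  finally show ?thesis .
qed

lemma entry_le_vec: "j < n \<Longrightarrow> size_rat (v j) \<le> size_vec n v"
proof -
  assume j: "j < n"
  have "size_rat (v j) \<le> (\<Sum>j<n. size_rat (v j))" using j by (intro member_le_sum) auto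
  also have "\<dots> \<le> size_vec n v" by (simp add: size_vec_def)
  finally show ?thesis .
qed

lemma compact_bound_coord:
  fixes S :: "((nat \<Rightarrow> real) \<times> (nat \<Rightarrow> real)) set"
  assumes "compact S"
  shows "\<exists>R. \<forall>p\<in>S. \<forall>j<n. \<bar>snd p j\<bar> \<le> R"
proof -
  have c: "compact ((\<lambda>p. snd p j) ` S)" for j
  proof (rule compact_continuous_image[OF _ assms])
    show "continuous_on S (\<lambda>p. snd p j)"
      by (rule continuous_on_product_then_coordinatewise[OF continuous_on_snd[OF continuous_on_id]])
  qed
  have "compact (\<Union>j<n. (\<lambda>p. snd p j) ` S)" by (rule compact_UN) (auto intro: c)
  then have "bounded (\<Union>j<n. (\<lambda>p. snd p j) ` S)" by (rule compact_imp_bounded)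
  then obtain R where R: "\<forall>z\<in>(\<Union>j<n. (\<lambda>p. snd p j) ` S). norm z \<le> R" unfolding bounded_iff by blast
  show ?thesis
  proof (intro exI[of _ R] ballI allI impI)
    fix p j assume "p \<in> S" "j < n"
    then have "snd p j \<in> (\<Union>j<n. (\<lambda>p. snd p j) ` S)" by blast
    then have "norm (snd p j) \<le> R" using R by blast
    then show "\<bar>snd p j\<bar> \<le> R" by simp
  qed
qed

lemma compact_slice_min:
  fixes S :: "((nat \<Rightarrow> real) \<times> (nat \<Rightarrow> real)) set" and c :: "nat \<Rightarrow> real"
  assumes "compact S" and "(x', y1) \<in> S"
  shows "\<exists>y. (x', y) \<in> S \<and> (\<forall>y'. (x', y') \<in> S \<longrightarrow> (\<Sum>j<n. c j * y j) \<le> (\<Sum>j<n. c j * y' j))"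
proof -
  have cl: "closed {p::(nat \<Rightarrow> real) \<times> (nat \<Rightarrow> real). fst p = x'}"
  proof -
    have e: "{p::(nat \<Rightarrow> real) \<times> (nat \<Rightarrow> real). fst p = x'} = (\<Inter>j. {p. fst p j = x' j})"
      by (auto simp: fun_eq_iff)
    have cj: "closed {p::(nat \<Rightarrow> real) \<times> (nat \<Rightarrow> real). fst p j = x' j}" for j
      by (rule closed_Collect_eq)
         (auto intro: continuous_on_product_then_coordinatewise[OF continuous_on_fst[OF continuous_on_id]])
    show ?thesis unfolding e using cj by (intro closed_INT) auto
  qed
  define T where "T = snd ` (S \<inter> {p. fst p = x'})"
  have Teq: "T = {y. (x', y) \<in> S}" unfolding T_def by force
  have "compact T" unfolding T_def
    by (rule compact_continuous_image[OF continuous_on_snd[OF continuous_on_id]])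
       (rule compact_Int_closed[OF assms(1) cl])
  moreover have "T \<noteq> {}" using assms(2) Teq by auto
  moreover have "continuous_on T (\<lambda>y. \<Sum>j<n. c j * y j)"
    by (intro continuous_on_sum continuous_on_mult continuous_on_const)
       (auto intro: continuous_on_product_then_coordinatewise[OF continuous_on_id])
  ultimately obtain y where "y \<in> T" "\<forall>y'\<in>T. (\<Sum>j<n. c j * y j) \<le> (\<Sum>j<n. c j * y' j)"
    using continuous_attains_inf by blast
  then show ?thesis unfolding Teq by blast
qed


lemma den_le_int: "snd (quotient_of q) \<le> 2 ^ size_rat q"
  using den_le[of q] by simp

lemma prod_den_le2:
  "real_of_int (\<Prod>i<r. \<Prod>j<c. snd (quotient_of (M i j))) \<le> 2 ^ (\<Sum>i<r. \<Sum>j<c. size_rat (M i j))"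
proof -
  have "real_of_int (\<Prod>i<r. \<Prod>j<c. snd (quotient_of (M i j))) = (\<Prod>i<r. \<Prod>j<c. real_of_int (snd (quotient_of (M i j))))"
    by simp
  also have "\<dots> \<le> (\<Prod>i<r. \<Prod>j<c. (2::real) ^ size_rat (M i j))"
  proof (rule prod_mono, rule conjI)
    fix i assume "i \<in> {..<r}"
    show "0 \<le> (\<Prod>j<c. real_of_int (snd (quotient_of (M i j))))"
      by (intro prod_nonneg) (simp add: den_pos less_imp_le)
    show "(\<Prod>j<c. real_of_int (snd (quotient_of (M i j)))) \<le> (\<Prod>j<c. (2::real) ^ size_rat (M i j))"
      by (intro prod_mono conjI) (simp_all add: den_pos less_imp_le den_le den_le_int)
  qed
  also have "\<dots> = 2 ^ (\<Sum>i<r. \<Sum>j<c. size_rat (M i j))" by (simp add: power_sum)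
  finally show ?thesis .
qed

lemma prod_den_le1:
  "real_of_int (\<Prod>j<c. snd (quotient_of (v j))) \<le> 2 ^ (\<Sum>j<c. size_rat (v j))"
proof -
  have "real_of_int (\<Prod>j<c. snd (quotient_of (v j))) = (\<Prod>j<c. real_of_int (snd (quotient_of (v j))))"
    by simp
  also have "\<dots> \<le> (\<Prod>j<c. (2::real) ^ size_rat (v j))"
    by (intro prod_mono conjI) (simp_all add: den_pos less_imp_le den_le den_le_int)
  also have "\<dots> = 2 ^ (\<Sum>j<c. size_rat (v j))" by (simp add: power_sum)
  finally show ?thesis .
qed

lemma ll_trunc1: "ll_feasible l nx ny C D b (trunc_v nx x) y \<longleftrightarrow> ll_feasible l nx ny C D b x y"
  by (simp add: ll_feasible_def mat_vec_trunc)

lemma ll_trunc2: "ll_feasible l nx ny C D b x (trunc_v ny y) \<longleftrightarrow> ll_feasible l nx ny C D b x y"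
  by (simp add: ll_feasible_def mat_vec_trunc)

lemma ul_iff: "ul_feasible m nx A a x \<longleftrightarrow> (\<forall>i<m. (\<Sum>j<nx. real_of_rat (A i j) * x j) \<ge> real_of_rat (a i))"
  by (simp add: ul_feasible_def mat_vec_def)

lemma ll_iff: "ll_feasible l nx ny C D b x y \<longleftrightarrow>
   (\<forall>i<l. (\<Sum>j<ny. real_of_rat (D i j) * y j) \<ge> real_of_rat (b i) - mat_vec C nx x i)"
  by (simp add: ll_feasible_def mat_vec_def)

lemma Hc_le:
  fixes W :: real
  assumes W: "W \<ge> 1" and p: "real p \<le> W" and pS: "p \<le> Sz"
  shows "Hc p (W^5) \<le> W ^ (6 * Sz + 1)"
proof -
  have f: "fact p \<le> W ^ p"
  proof -
    have "(fact p :: real) \<le> of_nat (p ^ p)" by (rule fact_le_power)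
    also have "\<dots> = real p ^ p" by simp
    also have "\<dots> \<le> W ^ p" using p by (intro power_mono) auto
    finally show ?thesis .
  qed
  have "Hc p (W^5) = real p * fact p * (W^5)^p" by (simp add: Hc_def)
  also have "\<dots> \<le> W * W ^ p * (W^5)^p"
    using p f W by (intro mult_mono) auto
  also have "\<dots> = W ^ (1 + p + 5 * p)" by (simp only: power_add power_mult power_one_right)
  also have "\<dots> = W ^ (6 * p + 1)" by (rule arg_cong[where f="\<lambda>k. W ^ k"]) simp
  also have "\<dots> \<le> W ^ (6 * Sz + 1)" using pS W by (intro power_increasing) auto
  finally show ?thesis .
qed


lemma pow_comb: "a + b = c \<Longrightarrow> (x::real) ^ a * x ^ b = x ^ c"
  by (simp add: power_add[symmetric])

lemma pow_comb1: "Suc a = c \<Longrightarrow> (x::real) * x ^ a = x ^ c"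
  by (simp add: power_Suc[symmetric] del: power_Suc)

lemma main_lemma:
  fixes m nx l ny :: nat and A C D :: "nat \<Rightarrow> nat \<Rightarrow> rat" and a b d :: "nat \<Rightarrow> rat"
  assumes H1: "let S = {(x, y). x \<in> Defs.vec_set nx \<and> y \<in> Defs.vec_set ny \<and>
                       ul_feasible m nx A a x \<and> ll_feasible l nx ny C D b x y}
      in S \<noteq> {} \<and> compact S"
  and H2: "\<forall>x. ul_feasible m nx A a x \<longrightarrow> (\<exists>y. ll_feasible l nx ny C D b x y)"
  and H3: "\<exists>M. \<forall>x. ul_feasible m nx A a x \<longrightarrow> (\<forall>j<nx. \<bar>x j\<bar> \<le> M)"
  shows "\<exists>\<kappa> :: rat. \<kappa> > 0 \<and>
        size_rat \<kappa> \<le> 40 * (size_mat m nx A + size_vec m a + size_mat l nx C +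
                           size_mat l ny D + size_vec l b + size_vec ny d + 1) ^ 2 \<and>
        (\<forall>(\<epsilon>::real) (x :: nat \<Rightarrow> real) (yh :: nat \<Rightarrow> real) (zh :: nat \<Rightarrow> real).
           \<epsilon> > 0 \<longrightarrow> ul_feasible m nx A a x \<longrightarrow>
           (\<forall>i<l. mat_vec D ny yh i \<ge> real_of_rat (b i) - mat_vec C nx x i - \<epsilon>) \<longrightarrow>
           (\<forall>j<ny. \<bar>(\<Sum>i<l. real_of_rat (D i j) * zh i) - real_of_rat (d j)\<bar> \<le> \<epsilon>) \<longrightarrow>
           (\<forall>i<l. zh i \<ge> - \<epsilon>) \<longrightarrow>
           (\<Sum>j<ny. real_of_rat (d j) * yh j)
             - (\<Sum>i<l. (real_of_rat (b i) - mat_vec C nx x i) * zh i) \<le> \<epsilon> \<longrightarrow>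
           (\<exists>ys. ll_optimal l nx ny C D b d x ys \<and>
                 (\<Sum>j<ny. \<bar>ys j - yh j\<bar>) \<le> \<epsilon> * real_of_rat \<kappa>))"
proof -
  define S where "S = {(x, y). x \<in> Defs.vec_set nx \<and> y \<in> Defs.vec_set ny \<and>
                       ul_feasible m nx A a x \<and> ll_feasible l nx ny C D b x y}"
  have Sne: "S \<noteq> {}" and Sc: "compact S" using H1 unfolding S_def Let_def by auto
  define Sz where "Sz = size_mat m nx A + size_vec m a + size_mat l nx C +
                           size_mat l ny D + size_vec l b + size_vec ny d + 1"
  define W :: real where "W = 2 ^ Sz"
  define E where "E = 6 * Sz + 1"
  have Sz1: "Sz \<ge> 1" by (simp add: Sz_def)
  have W2: "W \<ge> 2" using power_increasing[OF Sz1, of "2::real"] by (simp add: W_def)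
  have W1: "W \<ge> 1" and W0: "W \<ge> 0" using W2 by simp_all
  have Wmono: "W ^ i \<le> W ^ k" if "i \<le> k" for i k using power_increasing[OF that W1] .
  have Wpow: "(2::real) ^ k \<le> W" if "k \<le> Sz" for k unfolding W_def using that by (rule power_increasing) simp
  have natW: "real k \<le> W" if "k \<le> Sz" for k unfolding W_def using that by (rule nat_le_W)
  have WE0: "W ^ k \<ge> 0" for k using W0 by simp
  have dm: "m \<le> Sz" and dl: "l + 1 \<le> Sz" and dny: "ny \<le> Sz"
    by (simp_all add: Sz_def size_vec_def)
  have dnx: "nx \<le> Sz"
  proof (cases "nx = 0")
    case False
    have "m \<noteq> 0"
    proof
      assume m0: "m = 0"
      from H3 obtain M where M: "\<forall>x. ul_feasible m nx A a x \<longrightarrow> (\<forall>j<nx. \<bar>x j\<bar> \<le> M)" by blast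
      have "ul_feasible m nx A a (\<lambda>j. \<bar>M\<bar> + 1)" using m0 by (simp add: ul_feasible_def)
      then have "\<bar>\<bar>M\<bar> + 1\<bar> \<le> M" using M[rule_format, of "\<lambda>j. \<bar>M\<bar> + 1" 0] False by simp
      then show False by linarith
    qed
    then have "nx \<le> m * nx" by simp
    also have "\<dots> \<le> size_mat m nx A" by (simp add: size_mat_def)
    finally show ?thesis by (simp add: Sz_def)
  qed simp
  have szA: "size_rat (A i j) \<le> Sz" if "i < m" "j < nx" for i j
    using entry_le_mat[OF that, of A] by (simp add: Sz_def)
  have szC: "size_rat (C i j) \<le> Sz" if "i < l" "j < nx" for i j
    using entry_le_mat[OF that, of C] by (simp add: Sz_def)
  have szD: "size_rat (D i j) \<le> Sz" if "i < l" "j < ny" for i j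
    using entry_le_mat[OF that, of D] by (simp add: Sz_def)
  have sza: "size_rat (a i) \<le> Sz" if "i < m" for i
    using entry_le_vec[OF that, of a] by (simp add: Sz_def)
  have szb: "size_rat (b i) \<le> Sz" if "i < l" for i
    using entry_le_vec[OF that, of b] by (simp add: Sz_def)
  have szd: "size_rat (d j) \<le> Sz" if "j < ny" for j
    using entry_le_vec[OF that, of d] by (simp add: Sz_def)
  have absq: "\<bar>real_of_rat q\<bar> \<le> W" if "size_rat q \<le> Sz" for q
    using abs_rat_le[of q] Wpow[OF that] by linarith
  define Lz where "Lz = (\<Prod>i<m. \<Prod>j<nx. snd (quotient_of (A i j))) * (\<Prod>i<l. \<Prod>j<ny. snd (quotient_of (D i j)))
       * (\<Prod>j<ny. snd (quotient_of (d j)))"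
  have Lzpos: "Lz > 0" unfolding Lz_def by (intro mult_pos_pos prod_pos) (auto simp: den_pos)
  define L where "L = real_of_int Lz"
  have L1: "L \<ge> 1" using Lzpos by (simp add: L_def)
  have LW: "L \<le> W"
  proof -
    have "L = real_of_int (\<Prod>i<m. \<Prod>j<nx. snd (quotient_of (A i j))) * real_of_int (\<Prod>i<l. \<Prod>j<ny. snd (quotient_of (D i j)))
       * real_of_int (\<Prod>j<ny. snd (quotient_of (d j)))" by (simp add: L_def Lz_def)
    also have "\<dots> \<le> 2 ^ (\<Sum>i<m. \<Sum>j<nx. size_rat (A i j)) * 2 ^ (\<Sum>i<l. \<Sum>j<ny. size_rat (D i j)) * 2 ^ (\<Sum>j<ny. size_rat (d j))"
      by (intro mult_mono prod_den_le2 prod_den_le1) (auto intro!: prod_nonneg simp: den_pos less_imp_le)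
    also have "\<dots> = 2 ^ ((\<Sum>i<m. \<Sum>j<nx. size_rat (A i j)) + (\<Sum>i<l. \<Sum>j<ny. size_rat (D i j)) + (\<Sum>j<ny. size_rat (d j)))"
      by (simp add: power_add)
    also have "\<dots> \<le> W" by (rule Wpow) (simp add: Sz_def size_mat_def size_vec_def)
    finally show ?thesis .
  qed
  have dvdA: "snd (quotient_of (A i j)) dvd Lz" if "i < m" "j < nx" for i j
  proof -
    have "snd (quotient_of (A i j)) dvd (\<Prod>j<nx. snd (quotient_of (A i j)))" using that by (intro dvd_prodI) auto
    also have "\<dots> dvd (\<Prod>i<m. \<Prod>j<nx. snd (quotient_of (A i j)))" using that by (intro dvd_prodI) auto
    finally show ?thesis unfolding Lz_def by (intro dvd_mult2)
  qed
  have dvdD: "snd (quotient_of (D i j)) dvd Lz" if "i < l" "j < ny" for i j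
  proof -
    have "snd (quotient_of (D i j)) dvd (\<Prod>j<ny. snd (quotient_of (D i j)))" using that by (intro dvd_prodI) auto
    also have "\<dots> dvd (\<Prod>i<l. \<Prod>j<ny. snd (quotient_of (D i j)))" using that by (intro dvd_prodI) auto
    finally show ?thesis unfolding Lz_def by (intro dvd_mult2 dvd_mult)
  qed
  have dvdd: "snd (quotient_of (d j)) dvd Lz" if "j < ny" for j
  proof -
    have "snd (quotient_of (d j)) dvd (\<Prod>j<ny. snd (quotient_of (d j)))" using that by (intro dvd_prodI) auto
    then show ?thesis unfolding Lz_def by (intro dvd_mult)
  qed
  define Mt where "Mt = W ^ 2"
  define \<gamma> where "\<gamma> = W ^ 5"
  have Mt0: "Mt \<ge> 0" by (simp add: Mt_def)
  have ent: "L * real_of_rat q \<in> \<int> \<and> \<bar>L * real_of_rat q\<bar> \<le> Mt"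
    if "snd (quotient_of q) dvd Lz" "size_rat q \<le> Sz" for q
  proof
    show "L * real_of_rat q \<in> \<int>" unfolding L_def by (rule int_entry[OF that(1)])
    have "\<bar>L * real_of_rat q\<bar> = L * \<bar>real_of_rat q\<bar>" using L1 by (simp add: abs_mult)
    also have "\<dots> \<le> W * W" using L1 LW absq[OF that(2)] by (intro mult_mono) auto
    finally show "\<bar>L * real_of_rat q\<bar> \<le> Mt" by (simp add: Mt_def power2_eq_square)
  qed
  have gn: "real n * Mt^2 \<le> \<gamma>" if "n \<le> Sz" for n
  proof -
    have "Mt^2 = W^4" unfolding Mt_def by (simp add: power_mult[symmetric])
    then have "real n * Mt^2 = real n * W^4" by simp
    also have "\<dots> \<le> W * W^4" using natW[OF that] WE0 by (rule mult_right_mono)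
    also have "\<dots> = \<gamma>" by (simp add: \<gamma>_def power_Suc[symmetric] del: power_Suc)
    finally show ?thesis .
  qed
  have gL: "L * Mt \<le> \<gamma>"
  proof -
    have "L * Mt \<le> W * W^2" unfolding Mt_def using LW WE0 by (rule mult_right_mono)
    also have "\<dots> \<le> W ^ 5" using Wmono[of 3 5] by (simp add: power_Suc[symmetric] del: power_Suc)
    finally show ?thesis by (simp add: \<gamma>_def)
  qed
  have g1: "1 \<le> \<gamma>" using W1 by (simp add: \<gamma>_def one_le_power)
  have HcW: "Hc p \<gamma> \<le> W ^ E" if "p \<le> Sz" for p
    unfolding \<gamma>_def E_def by (rule Hc_le[OF W1 natW[OF that] that])
  have Hc0: "Hc p \<gamma> \<ge> 0" for p using g1 by (simp add: Hc_def)
  obtain x0 y0 where p0: "(x0, y0) \<in> S" using Sne by auto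
  have x0f: "ul_feasible m nx A a x0" using p0 by (simp add: S_def)
  obtain M where M: "\<forall>x. ul_feasible m nx A a x \<longrightarrow> (\<forall>j<nx. \<bar>x j\<bar> \<le> M)" using H3 by blast
  have intgA: "L * real_of_rat (A i j) \<in> \<int>" and bndA: "\<bar>L * real_of_rat (A i j)\<bar> \<le> Mt"
    if "i < m" "j < nx" for i j using ent[OF dvdA[OF that] szA[OF that]] by auto
  have intgD: "L * real_of_rat (D i j) \<in> \<int>" and bndD: "\<bar>L * real_of_rat (D i j)\<bar> \<le> Mt"
    if "i < l" "j < ny" for i j using ent[OF dvdD[OF that] szD[OF that]] by auto
  have intgd: "L * real_of_rat (d j) \<in> \<int>" and bndd: "\<bar>L * real_of_rat (d j)\<bar> \<le> Mt"
    if "j < ny" for j using ent[OF dvdd[OF that] szd[OF that]] by auto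
  have XB: "\<bar>x j\<bar> \<le> W ^ (E + 1)" if xf: "ul_feasible m nx A a x" and j: "j < nx" for x j
  proof -
    have "\<bar>x j\<bar> \<le> Hc m \<gamma> * W"
    proof (rule bounded_poly[where g="\<lambda>i j. real_of_rat (A i j)" and h="\<lambda>i. real_of_rat (a i)"
          and yy=x0 and R=M and L=L and Mt=Mt and \<gamma>=\<gamma> and hb=W and p=m and n=nx])
      show "\<forall>i<m. (\<Sum>j<nx. real_of_rat (A i j) * x0 j) \<ge> real_of_rat (a i)" using x0f by (simp add: ul_iff)
      show "\<forall>y. (\<forall>i<m. (\<Sum>j<nx. real_of_rat (A i j) * y j) \<ge> real_of_rat (a i)) \<longrightarrow> (\<forall>j<nx. \<bar>y j\<bar> \<le> M)"
        using M by (simp add: ul_iff)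
      show "\<forall>i<m. \<bar>real_of_rat (a i)\<bar> \<le> W" using absq sza by blast
      show "\<forall>i<m. (\<Sum>j<nx. real_of_rat (A i j) * x j) \<ge> real_of_rat (a i)" using xf by (simp add: ul_iff)
    qed (use L1 intgA bndA Mt0 gn[OF dnx] gL g1 W0 j in auto)
    also have "\<dots> \<le> W ^ E * W" using HcW[OF dm] W0 by (rule mult_right_mono)
    finally show ?thesis by (simp add: mult.commute)
  qed
  have BP: "\<bar>real_of_rat (b i) - mat_vec C nx x i\<bar> \<le> W ^ (E + 4)" if xf: "ul_feasible m nx A a x" and i: "i < l" for x i
  proof -
    have "\<bar>mat_vec C nx x i\<bar> \<le> (\<Sum>j<nx. \<bar>real_of_rat (C i j)\<bar> * \<bar>x j\<bar>)"
      unfolding mat_vec_def by (rule order_trans[OF sum_abs]) (simp add: abs_mult)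
    also have "\<dots> \<le> (\<Sum>j<nx. W * W ^ (E + 1))"
      by (intro sum_mono mult_mono) (use absq szC i XB xf W0 in auto)
    also have "\<dots> = real nx * (W * W ^ (E + 1))" by simp
    also have "\<dots> \<le> W * (W * W ^ (E + 1))" using natW[OF dnx] W0 by (intro mult_right_mono) auto
    also have "\<dots> = W ^ (E + 3)" by (simp add: power_add eval_nat_numeral mult_ac)
    finally have c: "\<bar>mat_vec C nx x i\<bar> \<le> W ^ (E + 3)" .
    have bb: "\<bar>real_of_rat (b i)\<bar> \<le> W ^ (E + 3)" using absq[OF szb[OF i]] Wmono[of 1 "E+3"] by simp
    have "\<bar>real_of_rat (b i) - mat_vec C nx x i\<bar> \<le> 2 * W ^ (E + 3)" using c bb by linarith
    also have "\<dots> \<le> W * W ^ (E + 3)" using W2 WE0 by (intro mult_right_mono) auto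
    also have "\<dots> = W ^ (E + 4)" by (rule pow_comb1) simp
    finally show ?thesis .
  qed
  (* qualitative bound from compactness *)
  obtain R where R: "\<forall>p\<in>S. \<forall>j<ny. \<bar>snd p j\<bar> \<le> R" using compact_bound_coord[OF Sc] by blast
  have inS: "(trunc_v nx x, trunc_v ny y) \<in> S" if "ul_feasible m nx A a x" "ll_feasible l nx ny C D b x y" for x y
    using that by (simp add: S_def trunc_vec_set ul_trunc ll_trunc)
  have YR: "\<bar>y j\<bar> \<le> R" if "ul_feasible m nx A a x" "ll_feasible l nx ny C D b x y" "j < ny" for x y j
    using R inS[OF that(1,2)] that(3) by (force simp: trunc_eq)
  have YB: "\<bar>y j\<bar> \<le> W ^ (2 * E + 4)" if xf: "ul_feasible m nx A a x" and yf: "ll_feasible l nx ny C D b x y"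
    and j: "j < ny" for x y j
  proof -
    obtain y1 where y1: "ll_feasible l nx ny C D b x y1" using H2 xf by blast
    have "\<bar>y j\<bar> \<le> Hc l \<gamma> * W ^ (E + 4)"
    proof (rule bounded_poly[where g="\<lambda>i j. real_of_rat (D i j)" and h="\<lambda>i. real_of_rat (b i) - mat_vec C nx x i"
          and yy=y1 and R=R and L=L and Mt=Mt and \<gamma>=\<gamma> and hb="W ^ (E + 4)" and p=l and n=ny])
      show "\<forall>i<l. (\<Sum>j<ny. real_of_rat (D i j) * y1 j) \<ge> real_of_rat (b i) - mat_vec C nx x i"
        using y1 by (simp add: ll_iff)
      show "\<forall>y. (\<forall>i<l. (\<Sum>j<ny. real_of_rat (D i j) * y j) \<ge> real_of_rat (b i) - mat_vec C nx x i) \<longrightarrow> (\<forall>j<ny. \<bar>y j\<bar> \<le> R)"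
        using YR[OF xf] by (simp add: ll_iff)
      show "\<forall>i<l. \<bar>real_of_rat (b i) - mat_vec C nx x i\<bar> \<le> W ^ (E + 4)" using BP[OF xf] by blast
      show "\<forall>i<l. (\<Sum>j<ny. real_of_rat (D i j) * y j) \<ge> real_of_rat (b i) - mat_vec C nx x i"
        using yf by (simp add: ll_iff)
    qed (use L1 intgD bndD Mt0 gn[OF dny] gL g1 WE0 j in auto)
    also have "\<dots> \<le> W ^ E * W ^ (E + 4)" using HcW[of l] dl WE0 by (intro mult_right_mono) auto
    also have "\<dots> = W ^ (2 * E + 4)" by (rule pow_comb) simp
    finally show ?thesis .
  qed
  have OPT: "\<exists>ys. ll_optimal l nx ny C D b d x ys" if xf: "ul_feasible m nx A a x" for x
  proof -
    obtain y1 where y1: "ll_feasible l nx ny C D b x y1" using H2 xf by blast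
    obtain y where y: "(trunc_v nx x, y) \<in> S"
      and ymin: "\<forall>y'. (trunc_v nx x, y') \<in> S \<longrightarrow> (\<Sum>j<ny. real_of_rat (d j) * y j) \<le> (\<Sum>j<ny. real_of_rat (d j) * y' j)"
      using compact_slice_min[OF Sc inS[OF xf y1], where n=ny and c="\<lambda>j. real_of_rat (d j)"] by blast
    have yf: "ll_feasible l nx ny C D b x y" using y by (simp add: S_def ll_trunc1)
    have "(\<Sum>j<ny. real_of_rat (d j) * y j) \<le> (\<Sum>j<ny. real_of_rat (d j) * y' j)"
      if "ll_feasible l nx ny C D b x y'" for y'
    proof -
      have "(\<Sum>j<ny. real_of_rat (d j) * y j) \<le> (\<Sum>j<ny. real_of_rat (d j) * trunc_v ny y' j)"
        using ymin inS[OF xf that] by blast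
      also have "\<dots> = (\<Sum>j<ny. real_of_rat (d j) * y' j)" by (rule sum.cong) (auto simp: trunc_eq)
      finally show ?thesis .
    qed
    then show ?thesis using yf by (auto simp: ll_optimal_def)
  qed
  define \<kappa> :: rat where "\<kappa> = 2 ^ (Sz * (3 * E + 11))"
  have \<kappa>real: "real_of_rat \<kappa> = W ^ (3 * E + 11)"
    by (simp add: \<kappa>_def W_def power_mult of_rat_power)
  have \<kappa>size: "size_rat \<kappa> \<le> 40 * Sz ^ 2"
  proof -
    have "size_rat \<kappa> \<le> Sz * (3 * E + 11) + 4" unfolding \<kappa>_def by (rule size_pow2)
    also have "\<dots> = 18 * (Sz * Sz) + 14 * Sz + 4" by (simp add: E_def algebra_simps)
    also have "\<dots> \<le> 40 * (Sz * Sz)"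
    proof -
      have "Sz \<le> Sz * Sz" "1 \<le> Sz * Sz" using Sz1 by simp_all
      then show ?thesis by linarith
    qed
    finally show ?thesis by (simp add: power2_eq_square)
  qed
  show ?thesis
  proof (intro exI[of _ \<kappa>] conjI allI impI)
    show "\<kappa> > 0" by (simp add: \<kappa>_def)
    show "size_rat \<kappa> \<le> 40 * (size_mat m nx A + size_vec m a + size_mat l nx C +
                           size_mat l ny D + size_vec l b + size_vec ny d + 1) ^ 2"
      using \<kappa>size by (simp add: Sz_def)
  next
    fix \<epsilon> :: real and x yh zh :: "nat \<Rightarrow> real"
    assume \<epsilon>: "\<epsilon> > 0" and xf: "ul_feasible m nx A a x"
      and c1: "\<forall>i<l. mat_vec D ny yh i \<ge> real_of_rat (b i) - mat_vec C nx x i - \<epsilon>"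
      and c2: "\<forall>j<ny. \<bar>(\<Sum>i<l. real_of_rat (D i j) * zh i) - real_of_rat (d j)\<bar> \<le> \<epsilon>"
      and c3: "\<forall>i<l. zh i \<ge> - \<epsilon>"
      and c4: "(\<Sum>j<ny. real_of_rat (d j) * yh j)
             - (\<Sum>i<l. (real_of_rat (b i) - mat_vec C nx x i) * zh i) \<le> \<epsilon>"
    obtain ys where ys: "ll_optimal l nx ny C D b d x ys" using OPT[OF xf] by blast
    define bp where "bp i = real_of_rat (b i) - mat_vec C nx x i" for i
    define opt where "opt = (\<Sum>j<ny. real_of_rat (d j) * ys j)"
    define s where "s i = (\<Sum>j<ny. real_of_rat (D i j) * ys j) - bp i" for i
    define K where "K = 1 + (\<Sum>j<ny. \<bar>ys j\<bar>) + (\<Sum>i<l. s i)"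
    have ysl: "ll_feasible l nx ny C D b x ys" using ys by (simp add: ll_optimal_def)
    have ysf: "(\<Sum>j<ny. real_of_rat (D i j) * ys j) \<ge> bp i" if "i < l" for i
      using ysl that by (simp add: ll_iff bp_def)
    have ysmin: "opt \<le> (\<Sum>j<ny. real_of_rat (d j) * y' j)" if "ll_feasible l nx ny C D b x y'" for y'
      using ys that by (simp add: ll_optimal_def opt_def)
    have s0: "s i \<ge> 0" if "i < l" for i using ysf[OF that] by (simp add: s_def)
    have sumabs0: "(\<Sum>j<ny. \<bar>ys j\<bar>) \<ge> 0" by (simp add: sum_nonneg)
    have sums0: "(\<Sum>i<l. s i) \<ge> 0" using s0 by (intro sum_nonneg) auto
    have K1: "K \<ge> 1" using sumabs0 sums0 by (simp add: K_def)
    (* approximate weak duality *)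
    define t where "t j = (\<Sum>i<l. real_of_rat (D i j) * zh i)" for j
    have e1: "(\<Sum>i<l. bp i * zh i) = (\<Sum>i<l. (\<Sum>j<ny. real_of_rat (D i j) * ys j) * zh i) - (\<Sum>i<l. s i * zh i)"
    proof -
      have "(\<Sum>i<l. bp i * zh i) = (\<Sum>i<l. (\<Sum>j<ny. real_of_rat (D i j) * ys j) * zh i - s i * zh i)"
        by (rule sum.cong) (auto simp: s_def algebra_simps)
      then show ?thesis by (simp add: sum_subtractf)
    qed
    have e2: "(\<Sum>i<l. (\<Sum>j<ny. real_of_rat (D i j) * ys j) * zh i) = (\<Sum>j<ny. ys j * t j)"
    proof -
      have "(\<Sum>i<l. (\<Sum>j<ny. real_of_rat (D i j) * ys j) * zh i) = (\<Sum>i<l. zh i * (\<Sum>j<ny. real_of_rat (D i j) * ys j))"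
        by (simp add: mult.commute)
      also have "\<dots> = (\<Sum>j<ny. (\<Sum>i<l. zh i * real_of_rat (D i j)) * ys j)"
        by (rule swap_lemma[symmetric])
      also have "\<dots> = (\<Sum>j<ny. ys j * t j)" by (simp add: t_def mult_ac)
      finally show ?thesis .
    qed
    have e3: "(\<Sum>j<ny. ys j * t j) \<le> opt + \<epsilon> * (\<Sum>j<ny. \<bar>ys j\<bar>)"
    proof -
      have "(\<Sum>j<ny. ys j * t j) \<le> (\<Sum>j<ny. real_of_rat (d j) * ys j + \<epsilon> * \<bar>ys j\<bar>)"
      proof (rule sum_mono)
        fix j assume j: "j \<in> {..<ny}"
        have "ys j * (t j - real_of_rat (d j)) \<le> \<bar>ys j\<bar> * \<bar>t j - real_of_rat (d j)\<bar>"
          by (metis abs_ge_self abs_mult)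
        also have "\<dots> \<le> \<bar>ys j\<bar> * \<epsilon>" using c2 j by (intro mult_left_mono) (auto simp: t_def)
        finally show "ys j * t j \<le> real_of_rat (d j) * ys j + \<epsilon> * \<bar>ys j\<bar>" by (simp add: algebra_simps)
      qed
      also have "\<dots> = opt + \<epsilon> * (\<Sum>j<ny. \<bar>ys j\<bar>)" by (simp add: opt_def sum.distrib sum_distrib_left)
      finally show ?thesis .
    qed
    have e4: "- (\<Sum>i<l. s i * zh i) \<le> \<epsilon> * (\<Sum>i<l. s i)"
    proof -
      have "(\<Sum>i<l. - (s i * zh i)) \<le> (\<Sum>i<l. \<epsilon> * s i)"
      proof (rule sum_mono)
        fix i assume i: "i \<in> {..<l}"
        have "0 \<le> s i * (zh i + \<epsilon>)" using s0 c3 i by (intro mult_nonneg_nonneg) auto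
        then show "- (s i * zh i) \<le> \<epsilon> * s i" by (simp add: algebra_simps)
      qed
      then show ?thesis by (simp add: sum_negf sum_distrib_left)
    qed
    have wd: "(\<Sum>j<ny. real_of_rat (d j) * yh j) \<le> opt + \<epsilon> * K"
    proof -
      have "(\<Sum>j<ny. real_of_rat (d j) * yh j) \<le> \<epsilon> + (\<Sum>i<l. bp i * zh i)"
        using c4 by (simp add: bp_def)
      also have "\<dots> \<le> \<epsilon> + opt + \<epsilon> * (\<Sum>j<ny. \<bar>ys j\<bar>) + \<epsilon> * (\<Sum>i<l. s i)"
        using e1 e2 e3 e4 by linarith
      also have "\<dots> = opt + \<epsilon> * K" by (simp add: K_def algebra_simps)
      finally show ?thesis .
    qed
    have ysb: "\<bar>ys j\<bar> \<le> W ^ (2 * E + 4)" if "j < ny" for j using YB[OF xf ysl that] .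
    have Kb: "K \<le> W ^ (2 * E + 10)"
    proof -
      have a1: "(\<Sum>j<ny. \<bar>ys j\<bar>) \<le> W ^ (2 * E + 5)"
      proof -
        have "(\<Sum>j<ny. \<bar>ys j\<bar>) \<le> real ny * W ^ (2 * E + 4)"
          using sum_bounded_above[of "{..<ny}" "\<lambda>j. \<bar>ys j\<bar>" "W ^ (2 * E + 4)"] ysb by simp
        also have "\<dots> \<le> W * W ^ (2 * E + 4)" using natW[OF dny] WE0 by (rule mult_right_mono)
        also have "\<dots> = W ^ (2 * E + 5)" by (rule pow_comb1) simp
        finally show ?thesis .
      qed
      have sb: "s i \<le> W ^ (2 * E + 7)" if i: "i < l" for i
      proof -
        have "\<bar>\<Sum>j<ny. real_of_rat (D i j) * ys j\<bar> \<le> (\<Sum>j<ny. W * W ^ (2 * E + 4))"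
          by (rule order_trans[OF sum_abs], rule sum_mono)
             (use absq szD i ysb W0 in \<open>auto simp: abs_mult intro!: mult_mono\<close>)
        also have "\<dots> = real ny * (W * W ^ (2 * E + 4))" by simp
        also have "\<dots> \<le> W * (W * W ^ (2 * E + 4))" using natW[OF dny] WE0 W0 by (intro mult_right_mono) auto
        also have "\<dots> = W ^ (2 * E + 6)" by (simp add: power_add eval_nat_numeral mult_ac)
        finally have q1: "\<bar>\<Sum>j<ny. real_of_rat (D i j) * ys j\<bar> \<le> W ^ (2 * E + 6)" .
        have q2: "\<bar>bp i\<bar> \<le> W ^ (2 * E + 6)"
          using BP[OF xf i] Wmono[of "E + 4" "2 * E + 6"] by (simp add: bp_def)
        have "s i \<le> 2 * W ^ (2 * E + 6)" unfolding s_def using q1 q2 by linarith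
        also have "\<dots> \<le> W * W ^ (2 * E + 6)" using W2 WE0 by (intro mult_right_mono) auto
        also have "\<dots> = W ^ (2 * E + 7)" by (rule pow_comb1) simp
        finally show ?thesis .
      qed
      have a2: "(\<Sum>i<l. s i) \<le> W ^ (2 * E + 8)"
      proof -
        have "(\<Sum>i<l. s i) \<le> real l * W ^ (2 * E + 7)"
          using sum_bounded_above[of "{..<l}" s "W ^ (2 * E + 7)"] sb by simp
        also have "\<dots> \<le> W * W ^ (2 * E + 7)" using natW[of l] dl WE0 by (intro mult_right_mono) auto
        also have "\<dots> = W ^ (2 * E + 8)" by (rule pow_comb1) simp
        finally show ?thesis .
      qed
      have a3: "1 \<le> W ^ (2 * E + 8)" using W1 by (simp add: one_le_power)
      have a4: "W ^ (2 * E + 5) \<le> W ^ (2 * E + 8)" by (rule Wmono) simp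
      have "K \<le> 3 * W ^ (2 * E + 8)" unfolding K_def using a1 a2 a3 a4 by linarith
      also have "\<dots> \<le> W ^ 2 * W ^ (2 * E + 8)"
      proof (rule mult_right_mono)
        have "(2::real) * 2 \<le> W * W" using W2 by (intro mult_mono) auto
        then show "3 \<le> W ^ 2" by (simp add: power2_eq_square)
      qed (rule WE0)
      also have "\<dots> = W ^ (2 * E + 10)" by (rule pow_comb) simp
      finally show ?thesis .
    qed
    define g where "g i j = (if i < l then real_of_rat (D i j) else - real_of_rat (d j))" for i j
    define h where "h i = (if i < l then bp i else - opt)" for i
    have intg: "L * g i j \<in> \<int>" and bndg: "\<bar>L * g i j\<bar> \<le> Mt" if "i < l + 1" "j < ny" for i j
    proof -
      have "L * g i j \<in> \<int> \<and> \<bar>L * g i j\<bar> \<le> Mt"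
      proof (cases "i < l")
        case True then show ?thesis using intgD bndD that by (simp add: g_def)
      next
        case False
        then have "L * g i j = - (L * real_of_rat (d j))" by (simp add: g_def)
        then show ?thesis using intgd[OF that(2)] bndd[OF that(2)] by simp
      qed
      then show "L * g i j \<in> \<int>" "\<bar>L * g i j\<bar> \<le> Mt" by auto
    qed
    have feas: "\<forall>i<l+1. (\<Sum>j<ny. g i j * ys j) \<ge> h i"
    proof (intro allI impI)
      fix i assume i: "i < l + 1"
      show "(\<Sum>j<ny. g i j * ys j) \<ge> h i"
      proof (cases "i < l")
        case True then show ?thesis using ysf by (simp add: g_def h_def)
      next
        case False then show ?thesis by (simp add: g_def h_def opt_def sum_negf)
      qed
    qed
    have \<eta>0: "\<epsilon> * K \<ge> 0" using \<epsilon> K1 by simp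
    have apx: "\<forall>i<l+1. (\<Sum>j<ny. g i j * yh j) \<ge> h i - \<epsilon> * K"
    proof (intro allI impI)
      fix i assume i: "i < l + 1"
      show "(\<Sum>j<ny. g i j * yh j) \<ge> h i - \<epsilon> * K"
      proof (cases "i < l")
        case True
        have "\<epsilon> \<le> \<epsilon> * K" using \<epsilon> K1 by simp
        have lhs: "(\<Sum>j<ny. g i j * yh j) = mat_vec D ny yh i" using True by (simp add: g_def mat_vec_def)
        have rhs: "h i = real_of_rat (b i) - mat_vec C nx x i" using True by (simp add: h_def bp_def)
        have "mat_vec D ny yh i \<ge> real_of_rat (b i) - mat_vec C nx x i - \<epsilon>" using c1 True by blast
        then show ?thesis unfolding lhs rhs using \<open>\<epsilon> \<le> \<epsilon> * K\<close> by linarith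
      next
        case False then show ?thesis using wd by (simp add: g_def h_def sum_negf)
      qed
    qed
    obtain y where yr: "\<forall>i<l+1. (\<Sum>j<ny. g i j * y j) \<ge> h i"
      and yd: "\<forall>j<ny. \<bar>y j - yh j\<bar> \<le> Hc (l+1) \<gamma> * (\<epsilon> * K)"
      using hoffman[where g=g and h=h and yy=ys and yh=yh and \<eta>="\<epsilon> * K" and p="l+1" and n=ny
          and L=L and Mt=Mt and \<gamma>=\<gamma>, OF L1 intg bndg Mt0 gn[OF dny] gL g1 feas \<eta>0 apx] by blast
    have yf: "ll_feasible l nx ny C D b x y"
      unfolding ll_iff
    proof (intro allI impI)
      fix i assume i: "i < l"
      then show "(\<Sum>j<ny. real_of_rat (D i j) * y j) \<ge> real_of_rat (b i) - mat_vec C nx x i"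
        using yr[rule_format, of i] by (simp add: g_def h_def bp_def)
    qed
    have yo: "(\<Sum>j<ny. real_of_rat (d j) * y j) \<le> opt"
      using yr[rule_format, of l] by (simp add: g_def h_def sum_negf)
    have yopt: "ll_optimal l nx ny C D b d x y"
      unfolding ll_optimal_def using yf yo ysmin by (meson order_trans)
    have "(\<Sum>j<ny. \<bar>y j - yh j\<bar>) \<le> real ny * (Hc (l+1) \<gamma> * (\<epsilon> * K))"
      using sum_bounded_above[of "{..<ny}" "\<lambda>j. \<bar>y j - yh j\<bar>" "Hc (l+1) \<gamma> * (\<epsilon> * K)"] yd by simp
    also have "\<dots> \<le> W * (W ^ E * (\<epsilon> * W ^ (2 * E + 10)))"
    proof (rule mult_mono)
      show "real ny \<le> W" by (rule natW[OF dny])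
      show "Hc (l+1) \<gamma> * (\<epsilon> * K) \<le> W ^ E * (\<epsilon> * W ^ (2 * E + 10))"
        using HcW[OF dl] Hc0 Kb \<epsilon> \<eta>0 WE0 K1 by (intro mult_mono) auto
    qed (use W0 Hc0 \<eta>0 in auto)
    also have "\<dots> = \<epsilon> * (W * W ^ E * W ^ (2 * E + 10))" by (simp add: mult_ac)
    also have "W * W ^ E * W ^ (2 * E + 10) = W ^ (3 * E + 11)"
    proof -
      have "W * W ^ E = W ^ (Suc E)" by (rule pow_comb1) simp
      moreover have "W ^ (Suc E) * W ^ (2 * E + 10) = W ^ (3 * E + 11)" by (rule pow_comb) simp
      ultimately show ?thesis by simp
    qed
    finally show "\<exists>ys. ll_optimal l nx ny C D b d x ys \<and> (\<Sum>j<ny. \<bar>ys j - yh j\<bar>) \<le> \<epsilon> * real_of_rat \<kappa>"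
      using yopt \<kappa>real by auto
  qed
qed


theorem lemma5p4:
  "\<exists>c k :: nat. \<forall>(m::nat) (nx::nat) (l::nat) (ny::nat)
      (A :: nat \<Rightarrow> nat \<Rightarrow> rat) (a :: nat \<Rightarrow> rat)
      (C :: nat \<Rightarrow> nat \<Rightarrow> rat) (D :: nat \<Rightarrow> nat \<Rightarrow> rat)
      (b :: nat \<Rightarrow> rat) (d :: nat \<Rightarrow> rat).
     (let S = {(x, y). x \<in> Defs.vec_set nx \<and> y \<in> Defs.vec_set ny \<and>
                       ul_feasible m nx A a x \<and> ll_feasible l nx ny C D b x y}
      in S \<noteq> {} \<and> compact S) \<and>
     (\<forall>x. ul_feasible m nx A a x \<longrightarrow> (\<exists>y. ll_feasible l nx ny C D b x y)) \<and>
     (\<exists>M. \<forall>x. ul_feasible m nx A a x \<longrightarrow> (\<forall>j<nx. \<bar>x j\<bar> \<le> M))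
     \<longrightarrow>
     (\<exists>\<kappa> :: rat. \<kappa> > 0 \<and>
        size_rat \<kappa> \<le> c * (size_mat m nx A + size_vec m a + size_mat l nx C +
                           size_mat l ny D + size_vec l b + size_vec ny d + 1) ^ k \<and>
        (\<forall>(\<epsilon>::real) (x :: nat \<Rightarrow> real) (yh :: nat \<Rightarrow> real) (zh :: nat \<Rightarrow> real).
           \<epsilon> > 0 \<longrightarrow> ul_feasible m nx A a x \<longrightarrow>
           (\<forall>i<l. mat_vec D ny yh i \<ge> real_of_rat (b i) - mat_vec C nx x i - \<epsilon>) \<longrightarrow>
           (\<forall>j<ny. \<bar>(\<Sum>i<l. real_of_rat (D i j) * zh i) - real_of_rat (d j)\<bar> \<le> \<epsilon>) \<longrightarrow>
           (\<forall>i<l. zh i \<ge> - \<epsilon>) \<longrightarrow>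
           (\<Sum>j<ny. real_of_rat (d j) * yh j)
             - (\<Sum>i<l. (real_of_rat (b i) - mat_vec C nx x i) * zh i) \<le> \<epsilon> \<longrightarrow>
           (\<exists>ys. ll_optimal l nx ny C D b d x ys \<and>
                 (\<Sum>j<ny. \<bar>ys j - yh j\<bar>) \<le> \<epsilon> * real_of_rat \<kappa>)))"
  apply (rule exI[of _ "40::nat"])
  apply (rule exI[of _ "2::nat"])
  apply (intro allI impI)
  apply (elim conjE)
  apply (rule main_lemma)
    apply assumption+
  done

end
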